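(* Let $\mathcal{R}$ be the right angled Artin group with generators $G,Q,P,F$ and relations $GQ=QG$, $QP=PQ$, $PF=FP$ (the path graph $G - Q - P - F$). Let $\mathbb{F}$ be either $\mathbb{C}$ with prime subfield $\mathbb{P}=\mathbb{Q}$, or an algebraically closed field of characteristic $p>0$ of infinite transcendence degree over $\mathbb{F}_p$, with prime subfield $\mathbb{P}=\mathbb{F}_p$. Let $a,b,c,d,\alpha,\beta,\gamma,\delta,\lambda\in\mathbb{F}$ with $ad-bc\ne0$, $\alpha\delta-\beta\gamma\neq0$, $\lambda\ne0$, and set $$G_0=\begin{pmatrix}a&b&0\\c&d&0\\0&0&1\end{pmatrix},\ Q_0=\begin{pmatrix}\lambda&0&0\\0&\lambda&0\\0&0&\lambda^{-1}\end{pmatrix},\ P_0=\begin{pmatrix}\lambda&0&0\\0&\lambda^{-1}&0\\0&0&\lambda\end{pmatrix},\ F_0=\begin{pmatrix}\alpha&0&\beta\\0&1&0\\\gamma&0&\delta\end{pmatrix}.$$ Suppose that: (1) no non-trivial power of the matrix $\begin{pmatrix}\alpha&\beta\\\gamma&\delta\end{pmatrix}$ has an off-diagonal entry equal to zero; and (2) the matrices $\begin{pmatrix}a&b\\c&d\end{pmatrix}$ and $\begin{pmatrix}\lambda&0\\0&\lambda^{-1}\end{pmatrix}$ in $GL(2,\mathbb{F})$ generate a non-abelian free group in which every matrix with top left entry equal to $1$ is the identity $I_2$. Let $\phi\in\mathbb{F}$ be transcendental over $\mathbb{P}(a,b,c,d,\alpha,\beta,\gamma,\delta,\lambda)$ and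 $D=\mathrm{diag}(\phi,\phi^2,\phi^3)$. Then the assignment $$G\mapsto F_0G_0F_0^{-1},\quad Q\mapsto F_0Q_0F_0^{-1},\quad P\mapsto P_0,\quad F\mapsto DF_0D^{-1}$$ extends to a faithful representation $\mathcal{R}\to GL(3,\mathbb{F})$. *)

theory Defs
  imports "HOL-Analysis.Analysis" "HOL-Computational_Algebra.Polynomial"
begin

text \<open>A word over a generator type: a list of letters (g, True) = g and (g, False) = g^-1.\<close>
type_synonym 'g word = "('g \<times> bool) list"

text \<open>The congruence on words defining the group with generators 'g and defining
relations g h = h g whenever E g h (a right angled Artin group; for E = False this is
the free group on 'g).\<close>
inductive word_equiv :: "('g \<Rightarrow> 'g \<Rightarrow> bool) \<Rightarrow> 'g word \<Rightarrow> 'g word \<Rightarrow> bool"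
  for E :: "'g \<Rightarrow> 'g \<Rightarrow> bool" where
  refl: "word_equiv E w w"
| sym: "word_equiv E u w \<Longrightarrow> word_equiv E w u"
| trans: "word_equiv E u v \<Longrightarrow> word_equiv E v w \<Longrightarrow> word_equiv E u w"
| cancel: "word_equiv E (u @ [(g, s), (g, \<not> s)] @ v) (u @ v)"
| comm: "E g h \<Longrightarrow> word_equiv E (u @ [(g, s), (h, t)] @ v) (u @ [(h, t), (g, s)] @ v)"

definition word_eval :: "('g \<Rightarrow> 'a::field ^'n^'n) \<Rightarrow> 'g word \<Rightarrow> 'a^'n^'n" where
  "word_eval \<rho> w = foldr (\<lambda>(g, s) M. (if s then \<rho> g else matrix_inv (\<rho> g)) ** M) w (mat 1)"

definition free_on :: "('g \<Rightarrow> 'a::field ^'n^'n) \<Rightarrow> bool" where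
  "free_on \<rho> \<longleftrightarrow> (\<forall>g. invertible (\<rho> g)) \<and>
     (\<forall>w. word_eval \<rho> w = mat 1 \<longrightarrow> word_equiv (\<lambda>_ _. False) w [])"

datatype gen = Gg | Qg | Pg | Fg

definition path_edge :: "gen \<Rightarrow> gen \<Rightarrow> bool" where
  "path_edge x y \<longleftrightarrow> {x, y} = {Gg, Qg} \<or> {x, y} = {Qg, Pg} \<or> {x, y} = {Pg, Fg}"

definition faithful_raag_rep :: "('g \<Rightarrow> 'g \<Rightarrow> bool) \<Rightarrow> ('g \<Rightarrow> 'a::field ^'n^'n) \<Rightarrow> bool" where
  "faithful_raag_rep E \<rho> \<longleftrightarrow>
     (\<forall>g. invertible (\<rho> g)) \<and>
     (\<forall>g h. E g h \<longrightarrow> \<rho> g ** \<rho> h = \<rho> h ** \<rho> g) \<and>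
     (\<forall>w. word_eval \<rho> w = mat 1 \<longrightarrow> word_equiv E w [])"

text \<open>The subfield generated by S (contains the prime subfield).\<close>
inductive_set subfield_gen :: "'a::field set \<Rightarrow> 'a set" for S :: "'a set" where
  base: "x \<in> S \<Longrightarrow> x \<in> subfield_gen S"
| zero: "0 \<in> subfield_gen S"
| one: "1 \<in> subfield_gen S"
| add: "x \<in> subfield_gen S \<Longrightarrow> y \<in> subfield_gen S \<Longrightarrow> x + y \<in> subfield_gen S"
| uminus: "x \<in> subfield_gen S \<Longrightarrow> - x \<in> subfield_gen S"
| mult: "x \<in> subfield_gen S \<Longrightarrow> y \<in> subfield_gen S \<Longrightarrow> x * y \<in> subfield_gen S"
| inv: "x \<in> subfield_gen S \<Longrightarrow> inverse x \<in> subfield_gen S"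

definition transcendental_over :: "'a::field set \<Rightarrow> 'a \<Rightarrow> bool" where
  "transcendental_over S x \<longleftrightarrow>
     (\<forall>p :: 'a poly. p \<noteq> 0 \<longrightarrow> (\<forall>i. coeff p i \<in> subfield_gen S) \<longrightarrow> poly p x \<noteq> 0)"

definition alg_indep :: "'a::field set \<Rightarrow> bool" where
  "alg_indep T \<longleftrightarrow> (\<forall>t\<in>T. transcendental_over (T - {t}) t)"

definition infinite_trdeg :: "'a::field itself \<Rightarrow> bool" where
  "infinite_trdeg _ \<longleftrightarrow> (\<exists>T :: 'a set. infinite T \<and> alg_indep T)"

definition alg_closed :: "'a::field itself \<Rightarrow> bool" where
  "alg_closed _ \<longleftrightarrow> (\<forall>p :: 'a poly. degree p \<ge> 1 \<longrightarrow> (\<exists>x. poly p x = 0))"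

definition iso_to_complex :: "'a::field itself \<Rightarrow> bool" where
  "iso_to_complex _ \<longleftrightarrow> (\<exists>f :: 'a \<Rightarrow> complex. bij f \<and> f 1 = 1 \<and>
      (\<forall>x y. f (x + y) = f x + f y) \<and> (\<forall>x y. f (x * y) = f x * f y))"

definition G0 :: "'a::field \<Rightarrow> 'a \<Rightarrow> 'a \<Rightarrow> 'a \<Rightarrow> 'a^3^3" where
  "G0 a b c d = vector [vector [a, b, 0], vector [c, d, 0], vector [0, 0, 1]]"

definition Q0 :: "'a::field \<Rightarrow> 'a^3^3" where
  "Q0 l = vector [vector [l, 0, 0], vector [0, l, 0], vector [0, 0, inverse l]]"

definition P0 :: "'a::field \<Rightarrow> 'a^3^3" where
  "P0 l = vector [vector [l, 0, 0], vector [0, inverse l, 0], vector [0, 0, l]]"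

definition F0 :: "'a::field \<Rightarrow> 'a \<Rightarrow> 'a \<Rightarrow> 'a \<Rightarrow> 'a^3^3" where
  "F0 al be ga de = vector [vector [al, 0, be], vector [0, 1, 0], vector [ga, 0, de]]"

definition Dmat :: "'a::field \<Rightarrow> 'a^3^3" where
  "Dmat f = vector [vector [f, 0, 0], vector [0, f^2, 0], vector [0, 0, f^3]]"

text \<open>Matrix powers (note: the operator ^ on vec types is componentwise, not matrix power).\<close>
primrec mat_pow :: "'a::semiring_1^'n^'n \<Rightarrow> nat \<Rightarrow> 'a^'n^'n" where
  "mat_pow M 0 = mat 1"
| "mat_pow M (Suc n) = M ** mat_pow M n"

definition mat2 :: "'a::field \<Rightarrow> 'a \<Rightarrow> 'a \<Rightarrow> 'a \<Rightarrow> 'a^2^2" where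
  "mat2 a b c d = vector [vector [a, b], vector [c, d]]"

definition gens2 :: "'a::field \<Rightarrow> 'a \<Rightarrow> 'a \<Rightarrow> 'a \<Rightarrow> 'a \<Rightarrow> bool \<Rightarrow> 'a^2^2" where
  "gens2 a b c d l x = (if x then mat2 a b c d else mat2 l 0 0 (inverse l))"

definition rep :: "'a::field \<Rightarrow> 'a \<Rightarrow> 'a \<Rightarrow> 'a \<Rightarrow> 'a \<Rightarrow> 'a \<Rightarrow> 'a \<Rightarrow> 'a \<Rightarrow> 'a \<Rightarrow> 'a
                    \<Rightarrow> gen \<Rightarrow> 'a^3^3" where
  "rep a b c d al be ga de l f g = (case g of
      Gg \<Rightarrow> F0 al be ga de ** G0 a b c d ** matrix_inv (F0 al be ga de)
    | Qg \<Rightarrow> F0 al be ga de ** Q0 l ** matrix_inv (F0 al be ga de)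
    | Pg \<Rightarrow> P0 l
    | Fg \<Rightarrow> Dmat f ** F0 al be ga de ** matrix_inv (Dmat f))"

end

theory Submission
  imports Defs
begin


lemma mm3: "((A::'a::semiring_1^3^3) ** B)$i$j = A$i$1*B$1$j + A$i$2*B$2$j + A$i$3*B$3$j"
  by (simp add: matrix_matrix_mult_def sum_3)
lemma mm2: "((A::'a::semiring_1^2^2) ** B)$i$j = A$i$1*B$1$j + A$i$2*B$2$j"
  by (simp add: matrix_matrix_mult_def sum_2)
lemma meq3: "(A::'a^3^3) = B \<longleftrightarrow> (\<forall>i j. A$i$j = B$i$j)"
  by (simp add: vec_eq_iff)
lemma mat1_3: "(mat 1::'a::zero_neq_one^3^3)$i$j = (if i = j then 1 else 0)"
  by (simp add: mat_def)

lemma matrix_inv_eq: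
  fixes A :: "'a::semiring_1^'n^'n"
  assumes "A ** B = mat 1" "B ** A = mat 1"
  shows "matrix_inv A = B"
proof -
  have ex: "\<exists>A'. A ** A' = mat 1 \<and> A' ** A = mat 1" using assms by blast
  let ?C = "matrix_inv A"
  have C: "A ** ?C = mat 1 \<and> ?C ** A = mat 1"
    unfolding matrix_inv_def by (rule someI_ex[OF ex])
  have "?C = ?C ** (A ** B)" using assms by simp
  also have "\<dots> = (?C ** A) ** B" by (simp add: matrix_mul_assoc)
  also have "\<dots> = B" using C by simp
  finally show ?thesis .
qed

lemma invertible_inv:
  fixes A :: "'a::semiring_1^'n^'n"
  assumes "invertible A"
  shows "A ** matrix_inv A = mat 1" "matrix_inv A ** A = mat 1"
  using assms unfolding invertible_def matrix_inv_def by (metis (mono_tags, lifting) someI_ex)+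

lemma invertibleI: "(A::'a::semiring_1^'n^'n) ** B = mat 1 \<Longrightarrow> B ** A = mat 1 \<Longrightarrow> invertible A"
  unfolding invertible_def by blast

definition F0i :: "'a::field \<Rightarrow> 'a \<Rightarrow> 'a \<Rightarrow> 'a \<Rightarrow> 'a^3^3" where
  "F0i al be ga de = vector [vector [de/(al*de - be*ga), 0, -be/(al*de - be*ga)], vector [0, 1, 0],
      vector [-ga/(al*de - be*ga), 0, al/(al*de - be*ga)]]"

definition Di :: "'a::field \<Rightarrow> 'a^3^3" where
  "Di f = vector [vector [inverse f, 0, 0], vector [0, inverse (f^2), 0], vector [0, 0, inverse (f^3)]]"

lemma F0_inv:
  assumes "al*de - be*ga \<noteq> 0"
  shows "F0 al be ga de ** F0i al be ga de = mat 1" "F0i al be ga de ** F0 al be ga de = mat 1"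
proof -
  define dd where "dd = al*de - be*ga"
  have n: "dd \<noteq> 0" using assms dd_def by simp
  have e: "al*de - be*ga = dd" by (simp add: dd_def)
  show "F0 al be ga de ** F0i al be ga de = mat 1"
    unfolding F0i_def dd_def[symmetric] using n e
    by (simp add: meq3 mm3 mat1_3 F0_def forall_3) (simp add: field_simps)
  show "F0i al be ga de ** F0 al be ga de = mat 1"
    unfolding F0i_def dd_def[symmetric] using n e
    by (simp add: meq3 mm3 mat1_3 F0_def forall_3) (simp add: field_simps)
qed

lemma D_inv:
  assumes "f \<noteq> 0"
  shows "Dmat f ** Di f = mat 1" "Di f ** Dmat f = mat 1"
  using assms
  by (auto simp: meq3 mm3 mat1_3 Dmat_def Di_def forall_3 field_simps)

lemma Q0_inv:
  assumes "l \<noteq> 0"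
  shows "Q0 l ** Q0 (inverse l) = mat 1" "Q0 (inverse l) ** Q0 l = mat 1"
  using assms
  by (auto simp: meq3 mm3 mat1_3 Q0_def forall_3 field_simps)

lemma P0_inv:
  assumes "l \<noteq> 0"
  shows "P0 l ** P0 (inverse l) = mat 1" "P0 (inverse l) ** P0 l = mat 1"
  using assms
  by (auto simp: meq3 mm3 mat1_3 P0_def forall_3 field_simps)

lemma G0_inv:
  assumes "a*d - b*c \<noteq> 0"
  shows "G0 a b c d ** G0 (d/(a*d-b*c)) (-b/(a*d-b*c)) (-c/(a*d-b*c)) (a/(a*d-b*c)) = mat 1"
        "G0 (d/(a*d-b*c)) (-b/(a*d-b*c)) (-c/(a*d-b*c)) (a/(a*d-b*c)) ** G0 a b c d = mat 1"
proof -
  define dd where "dd = a*d - b*c"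
  have n: "dd \<noteq> 0" using assms dd_def by simp
  have e: "a*d - b*c = dd" by (simp add: dd_def)
  show "G0 a b c d ** G0 (d/(a*d-b*c)) (-b/(a*d-b*c)) (-c/(a*d-b*c)) (a/(a*d-b*c)) = mat 1"
    unfolding dd_def[symmetric] using n e
    by (simp add: meq3 mm3 mat1_3 G0_def forall_3) (simp add: field_simps)
  show "G0 (d/(a*d-b*c)) (-b/(a*d-b*c)) (-c/(a*d-b*c)) (a/(a*d-b*c)) ** G0 a b c d = mat 1"
    unfolding dd_def[symmetric] using n e
    by (simp add: meq3 mm3 mat1_3 G0_def forall_3) (simp add: field_simps)
qed



lemma word_eval_Nil[simp]: "word_eval \<rho> [] = mat 1"
  by (simp add: word_eval_def)
lemma word_eval_Cons[simp]: "word_eval \<rho> ((g,s) # w) = (if s then \<rho> g else matrix_inv (\<rho> g)) ** word_eval \<rho> w"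
  by (simp add: word_eval_def)
lemma word_eval_append: "word_eval \<rho> (u @ v) = word_eval \<rho> u ** word_eval \<rho> v"
  by (induction u) (auto simp: matrix_mul_assoc)

lemma we_cong: "word_equiv E u v \<Longrightarrow> word_equiv E (x @ u @ y) (x @ v @ y)"
proof (induction rule: word_equiv.induct)
  case (refl w) then show ?case by (rule word_equiv.refl)
next
  case (sym u w) then show ?case by (metis word_equiv.sym)
next
  case (trans u v w) then show ?case by (metis word_equiv.trans)
next
  case (cancel u g s v)
  then show ?case using word_equiv.cancel[of E "x@u" g s "v@y"] by simp
next
  case (comm g h u s t v)
  then show ?case using word_equiv.comm[of E g h "x@u" s t "v@y"] by simp
qed

lemma we_trans: "word_equiv E u v \<Longrightarrow> word_equiv E v w \<Longrightarrow> word_equiv E u w"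
  by (rule word_equiv.trans)
lemma we_sym: "word_equiv E u v \<Longrightarrow> word_equiv E v u"
  by (rule word_equiv.sym)
lemma we_refl: "word_equiv E u u"
  by (rule word_equiv.refl)

lemma we_app: "word_equiv E u u' \<Longrightarrow> word_equiv E v v' \<Longrightarrow> word_equiv E (u @ v) (u' @ v')"
proof -
  assume a: "word_equiv E u u'" "word_equiv E v v'"
  have "word_equiv E ([] @ u @ v) ([] @ u' @ v)" using we_cong[OF a(1)] by blast
  moreover have "word_equiv E (u' @ v @ []) (u' @ v' @ [])" using we_cong[OF a(2)] by blast
  ultimately show ?thesis by (metis append_Nil append_Nil2 we_trans)
qed

lemma we_mono: "word_equiv E u v \<Longrightarrow> (\<And>g h. E g h \<Longrightarrow> E' g h) \<Longrightarrow> word_equiv E' u v"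
proof (induction rule: word_equiv.induct)
  case (cancel u g s v)
  then show ?case using word_equiv.cancel[of E' u g s v] by simp
next
  case (comm g h u s t v)
  then show ?case using word_equiv.comm[of E' g h u s t v] by simp
qed (auto intro: word_equiv.intros)

lemma we_map:
  assumes "word_equiv E u v" "\<And>g h. E g h \<Longrightarrow> E' (f g) (f h)"
  shows "word_equiv E' (map (\<lambda>(g,s). (f g, s)) u) (map (\<lambda>(g,s). (f g, s)) v)"
  using assms
proof (induction rule: word_equiv.induct)
  case (cancel u g s v)
  then show ?case using word_equiv.cancel[of E' "map (\<lambda>(g,s). (f g, s)) u" "f g" s] by simp
next
  case (comm g h u s t v)
  then show ?case using word_equiv.comm[of E' "f g" "f h" "map (\<lambda>(g,s). (f g, s)) u" s t] by simp
qed (auto intro: word_equiv.intros)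

definition winv :: "'g word \<Rightarrow> 'g word" where
  "winv w = rev (map (\<lambda>(g,s). (g, \<not> s)) w)"

lemma winv_simps[simp]: "winv [] = []" "winv ((g,s) # w) = winv w @ [(g, \<not> s)]"
  "winv (u @ v) = winv v @ winv u"
  by (auto simp: winv_def)

lemma we_inv_r: "word_equiv E (w @ winv w) []"
proof (induction w)
  case Nil then show ?case by (simp add: we_refl)
next
  case (Cons x w)
  obtain g s where x: "x = (g,s)" by (cases x)
  have "word_equiv E ([(g,s)] @ (w @ winv w) @ [(g, \<not> s)]) ([(g,s)] @ [] @ [(g, \<not> s)])"
    by (rule we_cong[OF Cons])
  moreover have "word_equiv E ([] @ [(g,s),(g,\<not>s)] @ []) ([] @ [])" by (rule word_equiv.cancel)
  ultimately show ?case using x by (auto intro: we_trans)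
qed

lemma we_inv_l: "word_equiv E (winv w @ w) []"
proof -
  have "winv (winv w) = w" by (induction w) auto
  then show ?thesis using we_inv_r[of E "winv w"] by simp
qed

lemma we_rot: "word_equiv E (v @ u) [] \<Longrightarrow> word_equiv E (u @ v) []"
proof -
  assume a: "word_equiv E (v @ u) []"
  have "word_equiv E (u @ (v @ u) @ winv u) (u @ [] @ winv u)" by (rule we_cong[OF a])
  then have "word_equiv E ((u @ v) @ (u @ winv u)) (u @ winv u)" by simp
  moreover have "word_equiv E ((u @ v) @ (u @ winv u) @ []) ((u @ v) @ [] @ [])" by (rule we_cong[OF we_inv_r])
  ultimately show ?thesis using we_inv_r[of E u] by (metis append_Nil2 append.left_neutral we_sym we_trans)
qed

lemma inv_comm:
  fixes A B :: "'a::field^'n^'n"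
  assumes "invertible A" "invertible B" "A ** B = B ** A"
  shows "matrix_inv A ** B = B ** matrix_inv A"
proof -
  have "matrix_inv A ** B = matrix_inv A ** B ** (A ** matrix_inv A)" using invertible_inv[OF assms(1)] by simp
  also have "\<dots> = matrix_inv A ** (B ** A) ** matrix_inv A" by (simp add: matrix_mul_assoc)
  also have "\<dots> = matrix_inv A ** (A ** B) ** matrix_inv A" using assms(3) by simp
  also have "\<dots> = (matrix_inv A ** A) ** B ** matrix_inv A" by (simp add: matrix_mul_assoc)
  finally show ?thesis using invertible_inv[OF assms(1)] by simp
qed

lemma eval_letter_comm:
  fixes \<rho> :: "'g \<Rightarrow> 'a::field^'n^'n"
  assumes "invertible (\<rho> g)" "invertible (\<rho> h)" "\<rho> g ** \<rho> h = \<rho> h ** \<rho> g"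
  shows "(if s then \<rho> g else matrix_inv (\<rho> g)) ** (if t then \<rho> h else matrix_inv (\<rho> h)) =
         (if t then \<rho> h else matrix_inv (\<rho> h)) ** (if s then \<rho> g else matrix_inv (\<rho> g))"
proof -
  have c1: "matrix_inv (\<rho> g) ** \<rho> h = \<rho> h ** matrix_inv (\<rho> g)" by (rule inv_comm[OF assms])
  have c2: "matrix_inv (\<rho> h) ** \<rho> g = \<rho> g ** matrix_inv (\<rho> h)" by (rule inv_comm[OF assms(2,1) assms(3)[symmetric]])
  have ih: "invertible (matrix_inv (\<rho> h))" using invertible_inv[OF assms(2)] invertible_def by blast
  have c3: "matrix_inv (\<rho> g) ** matrix_inv (\<rho> h) = matrix_inv (\<rho> h) ** matrix_inv (\<rho> g)"
    by (rule inv_comm[OF assms(1) ih c2[symmetric]])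
  show ?thesis using assms(3) c1 c2 c3 by auto
qed

lemma we_eval:
  fixes \<rho> :: "'g \<Rightarrow> 'a::field^'n^'n"
  assumes "word_equiv E u v" "\<And>g. invertible (\<rho> g)" "\<And>g h. E g h \<Longrightarrow> \<rho> g ** \<rho> h = \<rho> h ** \<rho> g"
  shows "word_eval \<rho> u = word_eval \<rho> v"
  using assms(1)
proof (induction rule: word_equiv.induct)
  case (cancel u g s v)
  have "(if s then \<rho> g else matrix_inv (\<rho> g)) ** (if \<not>s then \<rho> g else matrix_inv (\<rho> g)) = mat 1"
    using invertible_inv[OF assms(2)[of g]] by auto
  then show ?case by (simp add: word_eval_append matrix_mul_assoc)
next
  case (comm g h u s t v)
  have "(if s then \<rho> g else matrix_inv (\<rho> g)) ** (if t then \<rho> h else matrix_inv (\<rho> h)) =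
         (if t then \<rho> h else matrix_inv (\<rho> h)) ** (if s then \<rho> g else matrix_inv (\<rho> g))"
    by (rule eval_letter_comm[of \<rho> g h s t, OF assms(2) assms(2) assms(3)[OF comm]])
  then show ?case by (simp add: word_eval_append matrix_mul_assoc)
qed auto

lemma eval_rot:
  fixes \<rho> :: "'g \<Rightarrow> 'a::field^'n^'n"
  shows "word_eval \<rho> (u @ v) = mat 1 \<Longrightarrow> word_eval \<rho> (v @ u) = mat 1"
  by (simp add: word_eval_append matrix_left_right_inverse)

definition expo :: "'g \<Rightarrow> 'g word \<Rightarrow> int" where
  "expo g w = (\<Sum>x\<leftarrow>w. if fst x = g then (if snd x then 1 else -1) else 0)"

lemma expo_simps[simp]: "expo g [] = 0" "expo g (x # w) = (if fst x = g then (if snd x then 1 else -1) else 0) + expo g w"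
  "expo g (u @ v) = expo g u + expo g v"
  by (auto simp: expo_def)

lemma we_expo: "word_equiv E u v \<Longrightarrow> expo g u = expo g v"
  by (induction rule: word_equiv.induct) auto

lemma we_comm_letter:
  assumes "\<forall>y\<in>set v. E g (fst y)"
  shows "word_equiv E ([(g,s)] @ v) (v @ [(g,s)])"
  using assms
proof (induction v)
  case Nil then show ?case by (simp add: we_refl)
next
  case (Cons y v)
  obtain h t where y: "y = (h,t)" by (cases y)
  have "word_equiv E ([] @ [(g,s),(h,t)] @ v) ([] @ [(h,t),(g,s)] @ v)"
    by (rule word_equiv.comm) (use Cons.prems y in auto)
  moreover have "word_equiv E ([(h,t)] @ ([(g,s)] @ v) @ []) ([(h,t)] @ (v @ [(g,s)]) @ [])"
    by (rule we_cong) (use Cons in auto)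
  ultimately show ?case using y by (auto intro: we_trans)
qed

lemma we_comm_block:
  assumes "\<forall>x\<in>set u. \<forall>y\<in>set v. E (fst x) (fst y)"
  shows "word_equiv E (u @ v) (v @ u)"
  using assms
proof (induction u)
  case Nil then show ?case by (simp add: we_refl)
next
  case (Cons x u)
  obtain g s where x: "x = (g,s)" by (cases x)
  have "word_equiv E ([(g,s)] @ u @ v) ([(g,s)] @ v @ u)"
    using we_cong[OF Cons.IH, of "[(g,s)]" "[]"] Cons.prems by auto
  moreover have "word_equiv E ([] @ ([(g,s)] @ v) @ u) ([] @ (v @ [(g,s)]) @ u)"
    by (rule we_cong, rule we_comm_letter) (use Cons.prems x in auto)
  ultimately show ?case using x by (auto intro: we_trans)
qed



lemma conj_inv:
  fixes A :: "'a::field^'n^'n"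
  assumes "A ** A' = mat 1" "A' ** A = mat 1" "B ** B' = mat 1" "B' ** B = mat 1"
  shows "matrix_inv (A ** B ** A') = A ** B' ** A'" "invertible (A ** B ** A')"
proof -
  have 1: "(A ** B ** A') ** (A ** B' ** A') = mat 1"
  proof -
    have "(A ** B ** A') ** (A ** B' ** A') = A ** B ** (A' ** A) ** B' ** A'" by (simp add: matrix_mul_assoc)
    also have "\<dots> = A ** (B ** B') ** A'" using assms(2) by (simp add: matrix_mul_assoc)
    finally show ?thesis using assms by simp
  qed
  then have 2: "(A ** B' ** A') ** (A ** B ** A') = mat 1" by (simp add: matrix_left_right_inverse)
  show "matrix_inv (A ** B ** A') = A ** B' ** A'" by (rule matrix_inv_eq[OF 1 2])
  show "invertible (A ** B ** A')" by (rule invertibleI[OF 1 2])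
qed

lemma mat_pow_Suc': "mat_pow M (Suc n) = mat_pow M n ** M"
  by (induction n) (simp_all add: matrix_mul_assoc)

lemma mat_pow_conj:
  fixes A :: "'a::field^'n^'n"
  assumes "A' ** A = mat 1"
  shows "mat_pow (A ** M ** A') n = A ** mat_pow M n ** A'"
proof (induction n)
  case 0 then show ?case using assms by (simp add: matrix_left_right_inverse)
next
  case (Suc n)
  have "mat_pow (A ** M ** A') (Suc n) = A ** M ** (A' ** A) ** mat_pow M n ** A'"
    using Suc by (simp add: matrix_mul_assoc)
  then show ?case using assms by (simp add: matrix_mul_assoc)
qed

definition gpow :: "'g \<Rightarrow> int \<Rightarrow> 'g word" where
  "gpow g k = (if 0 \<le> k then replicate (nat k) (g, True) else replicate (nat (-k)) (g, False))"

lemma expo_replicate: "expo h (replicate n (g, s)) = (if h = g then (if s then int n else - int n) else 0)"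
  by (induction n) auto

lemma expo_gpow[simp]: "expo g (gpow g k) = k" "h \<noteq> g \<Longrightarrow> expo h (gpow g k) = 0"
  by (auto simp: gpow_def expo_replicate)

lemma set_gpow: "set (gpow g k) \<subseteq> {(g,True),(g,False)}"
  by (auto simp: gpow_def)

lemma gpow_Cons:
  "word_equiv E ((g,s) # gpow g k) (gpow g (k + (if s then 1 else -1)))"
proof (cases "0 \<le> k")
  case True
  show ?thesis
  proof (cases s)
    case True
    then have "(g,s) # gpow g k = gpow g (k + 1)" using \<open>0 \<le> k\<close>
      by (simp add: gpow_def nat_add_distrib)
    then show ?thesis using True by (simp add: we_refl)
  next
    case False
    show ?thesis
    proof (cases "k = 0")
      case True then show ?thesis using False by (simp add: gpow_def we_refl)
    next
      case k: False
      have "nat k = Suc (nat (k - 1))" using Suc_nat_eq_nat_zadd1[of "k-1"] k \<open>0 \<le> k\<close> by simp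
      then have "gpow g k = (g,True) # gpow g (k - 1)" using \<open>0 \<le> k\<close> k
        by (simp add: gpow_def)
      then have "(g,s) # gpow g k = [] @ [(g,s),(g,\<not>s)] @ gpow g (k - 1)" using False by simp
      then show ?thesis using word_equiv.cancel[of E "[]" g s "gpow g (k-1)"] False by simp
    qed
  qed
next
  case False
  show ?thesis
  proof (cases s)
    case s: False
    have "nat (-(k-1)) = Suc (nat (-k))" using Suc_nat_eq_nat_zadd1[of "-k"] False by simp
    then have "(g,s) # gpow g k = gpow g (k - 1)" using False s
      by (simp add: gpow_def)
    then show ?thesis using s by (simp add: we_refl)
  next
    case True
    have "nat (-k) = Suc (nat (-(k+1)))" using Suc_nat_eq_nat_zadd1[of "-(k+1)"] False by simp
    then have "gpow g k = (g,False) # gpow g (k + 1)" using False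
      by (simp add: gpow_def)
    then have "(g,s) # gpow g k = [] @ [(g,s),(g,\<not>s)] @ gpow g (k + 1)" using True by simp
    then show ?thesis using word_equiv.cancel[of E "[]" g s "gpow g (k+1)"] True by simp
  qed
qed

lemma single_gen:
  assumes "\<forall>x\<in>set w. fst x = g"
  shows "word_equiv E w (gpow g (expo g w))"
  using assms
proof (induction w)
  case Nil then show ?case by (simp add: gpow_def we_refl)
next
  case (Cons x w)
  obtain s where x: "x = (g,s)" using Cons.prems by (cases x) auto
  have "word_equiv E ([(g,s)] @ w @ []) ([(g,s)] @ gpow g (expo g w) @ [])"
    by (rule we_cong) (use Cons in auto)
  moreover have "word_equiv E ((g,s) # gpow g (expo g w)) (gpow g (expo g w + (if s then 1 else -1)))"
    by (rule gpow_Cons)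
  ultimately show ?case using x by (auto intro: we_trans simp: add.commute)
qed

lemma gpow_add: "word_equiv E (gpow g k @ gpow g l) (gpow g (k + l))"
proof -
  have "\<forall>x\<in>set (gpow g k @ gpow g l). fst x = g" using set_gpow by fastforce
  from single_gen[OF this] show ?thesis by simp
qed



locale setup3 =
  fixes a b c d al be ga de lm ph :: "'a::field"
  assumes det1: "a * d - b * c \<noteq> 0"
    and det2: "al * de - be * ga \<noteq> 0"
    and lam: "lm \<noteq> 0"
    and hyp1: "\<forall>n::nat. n \<ge> 1 \<longrightarrow>
                 (mat_pow (mat2 al be ga de) n) $ 1 $ 2 \<noteq> 0 \<and> (mat_pow (mat2 al be ga de) n) $ 2 $ 1 \<noteq> 0"
    and hyp2_free: "free_on (gens2 a b c d lm)"
    and hyp2_top: "\<forall>w. (word_eval (gens2 a b c d lm) w) $ 1 $ 1 = 1 \<longrightarrow>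
                        word_eval (gens2 a b c d lm) w = mat 1"
    and trans: "transcendental_over {a, b, c, d, al, be, ga, de, lm} ph"
begin

abbreviation "K \<equiv> subfield_gen {a, b, c, d, al, be, ga, de, lm}"
abbreviation "\<rho> \<equiv> rep a b c d al be ga de lm ph"
abbreviation "FF \<equiv> F0 al be ga de"
abbreviation "FI \<equiv> F0i al be ga de"
abbreviation "DD \<equiv> Dmat ph"
abbreviation "DI \<equiv> Di ph"
abbreviation "dt \<equiv> a*d - b*c"
abbreviation "GI \<equiv> G0 (d/dt) (-b/dt) (-c/dt) (a/dt)"

lemma ph_nz: "ph \<noteq> 0"
proof
  assume "ph = 0"
  have "[:0, 1:] \<noteq> (0::'a poly)" by simp
  moreover have "\<forall>i. coeff [:0, 1:] i \<in> K"
    by (auto simp: coeff_pCons split: nat.split intro: subfield_gen.zero subfield_gen.one)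
  ultimately have "poly [:0, 1:] ph \<noteq> 0" using trans unfolding transcendental_over_def by blast
  then show False using \<open>ph = 0\<close> by simp
qed

lemmas FFi = F0_inv[OF det2]
lemmas DDi = D_inv[OF ph_nz]
lemmas GGi = G0_inv[OF det1]
lemmas QQi = Q0_inv[OF lam]
lemmas PPi = P0_inv[OF lam]

lemma mi_F: "matrix_inv FF = FI" by (rule matrix_inv_eq[OF FFi])
lemma mi_D: "matrix_inv DD = DI" by (rule matrix_inv_eq[OF DDi])

lemma rho_simps:
  "\<rho> Gg = FF ** G0 a b c d ** FI" "\<rho> Qg = FF ** Q0 lm ** FI" "\<rho> Pg = P0 lm" "\<rho> Fg = DD ** FF ** DI"
  by (simp_all add: rep_def mi_F mi_D)

lemma P0_FF: "P0 lm ** FF = FF ** P0 lm"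
  by (simp add: meq3 mm3 F0_def P0_def forall_3)
lemma P0_DD: "P0 lm ** DD = DD ** P0 lm"
  by (simp add: meq3 mm3 Dmat_def P0_def forall_3)
lemma G0_Q0: "G0 a b c d ** Q0 lm = Q0 lm ** G0 a b c d"
  by (simp add: meq3 mm3 G0_def Q0_def forall_3)
lemma Q0_P0: "Q0 lm ** P0 lm = P0 lm ** Q0 lm"
  by (simp add: meq3 mm3 Q0_def P0_def forall_3)

lemma comm_inv_side:
  fixes A A' B :: "'a::field^'n^'n"
  assumes "A ** A' = mat 1" "A' ** A = mat 1" "B ** A = A ** B"
  shows "B ** A' = A' ** B"
proof -
  have "B ** A' = (A' ** A) ** B ** A'" using assms(2) by simp
  also have "\<dots> = A' ** (A ** B) ** A'" by (simp only: matrix_mul_assoc)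
  also have "\<dots> = A' ** (B ** A) ** A'" using assms(3) by simp
  also have "\<dots> = A' ** B ** (A ** A')" by (simp only: matrix_mul_assoc)
  also have "\<dots> = A' ** B" using assms(1) by simp
  finally show ?thesis .
qed
lemma P0_FI: "P0 lm ** FI = FI ** P0 lm" by (rule comm_inv_side[OF FFi P0_FF])
lemma P0_DI: "P0 lm ** DI = DI ** P0 lm" by (rule comm_inv_side[OF DDi P0_DD])

lemma rhoP_conj: "P0 lm = FF ** P0 lm ** FI"
proof -
  have "FF ** P0 lm ** FI = P0 lm ** FF ** FI" using P0_FF by simp
  also have "\<dots> = P0 lm" using FFi(1) by (simp add: matrix_mul_assoc[symmetric])
  finally show ?thesis by simp
qed

text \<open>the representation in conjugated coordinates\<close>
definition rho' :: "gen \<Rightarrow> 'a^3^3" where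
  "rho' g = (case g of Gg \<Rightarrow> G0 a b c d | Qg \<Rightarrow> Q0 lm | Pg \<Rightarrow> P0 lm | Fg \<Rightarrow> mat 1)"
definition rho'i :: "gen \<Rightarrow> 'a^3^3" where
  "rho'i g = (case g of Gg \<Rightarrow> GI | Qg \<Rightarrow> Q0 (inverse lm) | Pg \<Rightarrow> P0 (inverse lm) | Fg \<Rightarrow> mat 1)"

lemma rho'_inv_conj: "rho' g ** rho'i g = mat 1 \<and> rho'i g ** rho' g = mat 1"
proof (cases g)
  case Gg then show ?thesis using GGi unfolding rho'_def rho'i_def by simp
next
  case Qg then show ?thesis using QQi unfolding rho'_def rho'i_def by simp
next
  case Pg then show ?thesis using PPi unfolding rho'_def rho'i_def by simp
next
  case Fg then show ?thesis unfolding rho'_def rho'i_def by simp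
qed
lemma rho'_inv: "rho' g ** rho'i g = mat 1" "rho'i g ** rho' g = mat 1"
  using rho'_inv_conj by auto

lemma mi_rho': "matrix_inv (rho' g) = rho'i g" by (rule matrix_inv_eq[OF rho'_inv])

lemma rho_H: "g \<noteq> Fg \<Longrightarrow> \<rho> g = FF ** rho' g ** FI"
  by (cases g) (simp_all add: rho_simps rho'_def rhoP_conj[symmetric])

lemma rho_inv: "matrix_inv (\<rho> g) = (if g = Fg then DD ** FI ** DI else FF ** rho'i g ** FI)"
         "invertible (\<rho> g)"
proof -
  have A: "matrix_inv (\<rho> g) = (if g = Fg then DD ** FI ** DI else FF ** rho'i g ** FI) \<and> invertible (\<rho> g)"
  proof (cases "g = Fg")
    case True
    then show ?thesis using conj_inv[OF DDi FFi] by (simp add: rho_simps)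
  next
    case False
    then show ?thesis using conj_inv[OF FFi rho'_inv] by (simp add: rho_H)
  qed
  then show "matrix_inv (\<rho> g) = (if g = Fg then DD ** FI ** DI else FF ** rho'i g ** FI)"
         "invertible (\<rho> g)" by auto
qed

lemma rho_comm: "path_edge g h \<Longrightarrow> \<rho> g ** \<rho> h = \<rho> h ** \<rho> g"
proof -
  have GQ: "\<rho> Gg ** \<rho> Qg = \<rho> Qg ** \<rho> Gg"
  proof -
    have "\<rho> Gg ** \<rho> Qg = FF ** G0 a b c d ** (FI ** FF) ** Q0 lm ** FI" by (simp add: rho_simps matrix_mul_assoc)
    also have "\<dots> = FF ** (G0 a b c d ** Q0 lm) ** FI" using FFi by (simp add: matrix_mul_assoc)
    also have "\<dots> = FF ** (Q0 lm ** G0 a b c d) ** FI" using G0_Q0 by simp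
    also have "\<dots> = FF ** Q0 lm ** (FI ** FF) ** G0 a b c d ** FI" using FFi by (simp add: matrix_mul_assoc)
    also have "\<dots> = \<rho> Qg ** \<rho> Gg" by (simp add: rho_simps matrix_mul_assoc)
    finally show ?thesis .
  qed
  have QP: "\<rho> Qg ** \<rho> Pg = \<rho> Pg ** \<rho> Qg"
  proof -
    have "\<rho> Qg ** \<rho> Pg = FF ** Q0 lm ** (FI ** P0 lm)" by (simp add: rho_simps matrix_mul_assoc)
    also have "\<dots> = FF ** (Q0 lm ** P0 lm) ** FI" by (simp add: P0_FI[symmetric] matrix_mul_assoc)
    also have "\<dots> = (FF ** P0 lm) ** Q0 lm ** FI" by (simp add: Q0_P0 matrix_mul_assoc)
    also have "\<dots> = \<rho> Pg ** \<rho> Qg" by (simp add: rho_simps P0_FF[symmetric] matrix_mul_assoc)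
    finally show ?thesis .
  qed
  have PF: "\<rho> Pg ** \<rho> Fg = \<rho> Fg ** \<rho> Pg"
  proof -
    have "\<rho> Pg ** \<rho> Fg = (P0 lm ** DD) ** FF ** DI" by (simp add: rho_simps matrix_mul_assoc)
    also have "\<dots> = DD ** (P0 lm ** FF) ** DI" by (simp add: P0_DD matrix_mul_assoc)
    also have "\<dots> = DD ** FF ** (P0 lm ** DI)" by (simp add: P0_FF matrix_mul_assoc)
    also have "\<dots> = \<rho> Fg ** \<rho> Pg" by (simp add: rho_simps P0_DI matrix_mul_assoc)
    finally show ?thesis .
  qed
  assume "path_edge g h"
  then show ?thesis using GQ QP PF
    by (cases g; cases h) (auto simp: path_edge_def doubleton_eq_iff)
qed

lemma eval_we: "word_equiv path_edge u v \<Longrightarrow> word_eval \<rho> u = word_eval \<rho> v"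
  by (rule we_eval[OF _ rho_inv(2) rho_comm])

end


definition bd :: "'a::field^2^2 \<Rightarrow> 'a \<Rightarrow> 'a^3^3" where
  "bd M s = vector [vector [M$1$1, M$1$2, 0], vector [M$2$1, M$2$2, 0], vector [0, 0, s]]"

lemma meq2: "(A::'a^2^2) = B \<longleftrightarrow> (\<forall>i j. A$i$j = B$i$j)"
  by (simp add: vec_eq_iff)
lemma mat1_2: "(mat 1::'a::zero_neq_one^2^2)$i$j = (if i = j then 1 else 0)"
  by (simp add: mat_def)
lemma mat2_simps[simp]: "mat2 a b c d $1$1 = a" "mat2 a b c d $1$2 = b" "mat2 a b c d $2$1 = c" "mat2 a b c d $2$2 = d"
  by (simp_all add: mat2_def)

lemma bd_entries: "bd M s $1$1 = M$1$1" "bd M s $1$2 = M$1$2" "bd M s $2$1 = M$2$1" "bd M s $2$2 = M$2$2"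
  "bd M s $3$3 = s" "bd M s $1$3 = 0" "bd M s $3$1 = 0" "bd M s $2$3 = 0" "bd M s $3$2 = 0"
  by (simp_all add: bd_def)

lemma bd_mult: "bd M s ** bd N t = bd (M ** N) (s * t)"
  by (simp add: meq3 mm3 mm2 bd_def forall_3)
lemma bd_one: "bd (mat 1) 1 = mat 1"
  by (simp add: meq3 mat1_3 mat1_2 bd_def forall_3)

lemma bd_inv:
  fixes M :: "'a::field^2^2"
  assumes "invertible M" "s \<noteq> 0"
  shows "matrix_inv (bd M s) = bd (matrix_inv M) (inverse s)"
  by (rule matrix_inv_eq) (simp_all add: bd_mult invertible_inv[OF assms(1)] assms(2) bd_one)

lemma bd_eq_one: "bd M s = mat 1 \<Longrightarrow> M = mat 1 \<and> s = 1"
  by (simp add: meq3 meq2 mat1_3 mat1_2 bd_def forall_3 forall_2)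

lemma eval_replicate:
  "word_eval \<sigma> (replicate n (g, True)) = mat_pow (\<sigma> g) n"
  "word_eval \<sigma> (replicate n (g, False)) = mat_pow (matrix_inv (\<sigma> g)) n"
  by (induction n) simp_all

lemma eval_gpow:
  "word_eval \<sigma> (gpow g k) = (if 0 \<le> k then mat_pow (\<sigma> g) (nat k) else mat_pow (matrix_inv (\<sigma> g)) (nat (-k)))"
  by (simp add: gpow_def eval_replicate)

lemma mat_pow_diag2: "mat_pow (mat2 l 0 0 (inverse l)) n = mat2 (l ^ n) 0 0 (inverse l ^ n)"
proof (induction n)
  case 0 then show ?case by (simp add: meq2 mat1_2 forall_2)
next
  case (Suc n) then show ?case by (simp add: meq2 mm2 forall_2)
qed

lemma mat_pow_Q0: "mat_pow (Q0 l) n = Q0 (l ^ n)"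
proof (induction n)
  case 0 then show ?case by (simp add: meq3 mat1_3 Q0_def forall_3)
next
  case (Suc n) then show ?case by (simp add: meq3 mm3 Q0_def forall_3 inverse_mult_distrib)
qed

lemma word_eval_cong: "(\<forall>x\<in>set w. \<rho> (fst x) = \<sigma> (fst x)) \<Longrightarrow> word_eval \<rho> w = word_eval \<sigma> w"
  by (induction w) auto

definition tob :: "gen word \<Rightarrow> bool word" where
  "tob u = map (\<lambda>(g,s). (g = Gg, s)) u"
definition fb :: "bool \<Rightarrow> gen" where
  "fb b = (if b then Gg else Pg)"

lemma tob_simps[simp]: "tob [] = []" "tob ((g,s)#u) = (g = Gg, s) # tob u" "tob (u @ v) = tob u @ tob v"
  by (simp_all add: tob_def)

lemma fb_tob: "\<forall>x\<in>set u. fst x \<in> {Gg, Pg} \<Longrightarrow> map (\<lambda>(g,s). (fb g, s)) (tob u) = u"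
  by (induction u) (auto simp: fb_def)

lemma tob_gpow: "tob (gpow Pg k) = gpow False k"
  by (simp add: gpow_def tob_def)

lemma sepQ_aux:
  assumes "\<forall>x\<in>set h. fst x \<noteq> Fg"
  shows "\<exists>qs u. (\<forall>x\<in>set qs. fst x = Qg) \<and> (\<forall>x\<in>set u. fst x \<in> {Gg, Pg}) \<and> word_equiv path_edge h (qs @ u)"
  using assms
proof (induction h)
  case Nil
  show ?case by (rule exI[of _ "[]"], rule exI[of _ "[]"]) (simp add: we_refl)
next
  case (Cons x h)
  then obtain qs u where q: "\<forall>x\<in>set qs. fst x = Qg" and u: "\<forall>x\<in>set u. fst x \<in> {Gg, Pg}"
    and e: "word_equiv path_edge h (qs @ u)" by auto
  obtain g s where x: "x = (g,s)" by (cases x)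
  have e2: "word_equiv path_edge ([x] @ h @ []) ([x] @ (qs @ u) @ [])" by (rule we_cong[OF e])
  show ?case
  proof (cases "g = Qg")
    case True
    then show ?thesis using e2 q u x by (intro exI[of _ "x # qs"] exI[of _ u]) auto
  next
    case False
    then have g: "g = Gg \<or> g = Pg" using Cons.prems x by (cases g) auto
    have "word_equiv path_edge ([] @ ([x] @ qs) @ u) ([] @ (qs @ [x]) @ u)"
      apply (rule we_cong, rule we_comm_block)
      using g q x by (auto simp: path_edge_def doubleton_eq_iff)
    then have "word_equiv path_edge (x # h) (qs @ (x # u))" using e2 by (auto intro: we_trans)
    then show ?thesis using q u g x by (intro exI[of _ qs] exI[of _ "x # u"]) auto
  qed
qed

lemma sepQ:
  assumes "\<forall>x\<in>set h. fst x \<noteq> Fg"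
  shows "\<exists>m u. (\<forall>x\<in>set u. fst x \<in> {Gg, Pg}) \<and> word_equiv path_edge h (gpow Qg m @ u)"
proof -
  obtain qs u where q: "\<forall>x\<in>set qs. fst x = Qg" and u: "\<forall>x\<in>set u. fst x \<in> {Gg, Pg}"
    and e: "word_equiv path_edge h (qs @ u)" using sepQ_aux[OF assms] by blast
  have "word_equiv path_edge (qs @ u) (gpow Qg (expo Qg qs) @ u)"
    using we_app[OF single_gen[OF q] we_refl] by blast
  then show ?thesis using e u by (blast intro: we_trans)
qed



context setup3 begin

abbreviation "g2 \<equiv> gens2 a b c d lm"

lemma g2_inv: "invertible (g2 x)"
  using hyp2_free unfolding free_on_def by blast

lemma rho'_bd: "rho' Gg = bd (g2 True) 1" "rho' Pg = bd (g2 False) lm"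
  by (simp_all add: rho'_def meq3 bd_def G0_def P0_def gens2_def forall_3)

lemma eval_gp:
  assumes "\<forall>x\<in>set u. fst x \<in> {Gg, Pg}"
  shows "word_eval rho' u = bd (word_eval g2 (tob u)) (lm powi expo Pg u)"
  using assms
proof (induction u)
  case Nil then show ?case by (simp add: bd_one)
next
  case (Cons x u)
  obtain g s where x: "x = (g,s)" by (cases x)
  have IH: "word_eval rho' u = bd (word_eval g2 (tob u)) (lm powi expo Pg u)" using Cons by auto
  have g: "g = Gg \<or> g = Pg" using Cons.prems x by auto
  show ?case
  proof (cases "g = Gg")
    case True
    then show ?thesis using IH x
      by (auto simp: rho'_bd bd_mult bd_inv[OF g2_inv])
  next
    case False
    then have gP: "g = Pg" using g by simp
    have pw: "lm powi ((if s then 1 else -1) + expo Pg u) = (if s then lm else inverse lm) * lm powi expo Pg u"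
      using lam by (simp add: power_int_add)
    show ?thesis using IH x gP pw lam
      by (auto simp: rho'_bd bd_mult bd_inv[OF g2_inv])
  qed
qed

lemma conj_eval:
  assumes "\<forall>x\<in>set w. fst x \<noteq> Fg"
  shows "word_eval \<rho> w = FF ** word_eval rho' w ** FI"
  using assms
proof (induction w)
  case Nil then show ?case using FFi by simp
next
  case (Cons x w)
  obtain g s where x: "x = (g,s)" by (cases x)
  have gF: "g \<noteq> Fg" using Cons.prems x by auto
  have mi: "matrix_inv (\<rho> g) = FF ** rho'i g ** FI" using rho_inv(1)[of g] gF by simp
  have l: "(if s then \<rho> g else matrix_inv (\<rho> g)) = FF ** (if s then rho' g else matrix_inv (rho' g)) ** FI"
    using gF mi rho_H[OF gF] mi_rho'[of g] by simp
  have "word_eval \<rho> (x # w) = FF ** (if s then rho' g else matrix_inv (rho' g)) ** (FI ** FF) ** word_eval rho' w ** FI"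
    using Cons x l by (simp add: matrix_mul_assoc)
  then show ?case using x FFi by (simp add: matrix_mul_assoc)
qed

lemma eval_Qpow: "word_eval rho' (gpow Qg m) = Q0 (lm powi m)"
proof -
  have mi: "matrix_inv (Q0 lm) = Q0 (inverse lm)" by (rule matrix_inv_eq[OF QQi])
  show ?thesis using lam
    by (simp add: eval_gpow rho'_def mi mat_pow_Q0 power_int_def)
qed

lemma eval_g2_Ppow: "word_eval g2 (gpow False k) = mat2 (lm powi k) 0 0 (inverse (lm powi k))"
proof -
  have g2F: "g2 False = mat2 lm 0 0 (inverse lm)" by (simp add: gens2_def)
  have mi: "matrix_inv (g2 False) = mat2 (inverse lm) 0 0 lm"
    unfolding g2F by (rule matrix_inv_eq) (use lam in \<open>simp_all add: meq2 mm2 mat1_2 forall_2\<close>)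
  have p1: "mat_pow (g2 False) n = mat2 (lm ^ n) 0 0 (inverse lm ^ n)" for n
    unfolding g2F by (rule mat_pow_diag2)
  have p2: "mat_pow (matrix_inv (g2 False)) n = mat2 (inverse lm ^ n) 0 0 (lm ^ n)" for n
    unfolding mi using mat_pow_diag2[of "inverse lm" n] by simp
  show ?thesis
    by (simp add: eval_gpow p1 p2 power_int_def power_inverse del: gens2_def)
qed

lemma Q0_bd: "(Q0 x ** bd U s) $1$1 = x * U$1$1" "(Q0 x ** bd U s) $3$3 = inverse x * s"
  "(Q0 x ** bd U s) $1$3 = 0" "(Q0 x ** bd U s) $3$1 = 0" "(Q0 x ** bd U s) $2$3 = 0" "(Q0 x ** bd U s) $3$2 = 0"
  by (simp_all add: mm3 Q0_def bd_def)

lemma Q0_bd_eq: "Q0 1 ** bd U s = bd U s"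
  by (simp add: meq3 mm3 Q0_def bd_def forall_3)

lemma H_struct:
  assumes hw: "\<forall>x\<in>set h. fst x \<noteq> Fg"
  shows "\<exists>Y. word_eval \<rho> h = FF ** Y ** FI \<and> Y$1$3 = 0 \<and> Y$3$1 = 0 \<and> Y$2$3 = 0 \<and> Y$3$2 = 0 \<and>
     (Y$1$1 = Y$3$3 \<longrightarrow> (\<exists>p. word_equiv path_edge h (gpow Pg p))) \<and>
     (Y = mat 1 \<longrightarrow> word_equiv path_edge h [])"
proof -
  obtain m u where gp: "\<forall>x\<in>set u. fst x \<in> {Gg, Pg}" and eqv: "word_equiv path_edge h (gpow Qg m @ u)"
    using sepQ[OF hw] by blast
  have hw2: "\<forall>x\<in>set (gpow Qg m @ u). fst x \<noteq> Fg" using gp set_gpow[of Qg m] by auto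
  define U where "U = word_eval g2 (tob u)"
  define e where "e = expo Pg u"
  define Y where "Y = Q0 (lm powi m) ** bd U (lm powi e)"
  have ev: "word_eval \<rho> h = FF ** Y ** FI"
    using eval_we[OF eqv] conj_eval[OF hw2] unfolding Y_def U_def e_def
    by (simp add: word_eval_append eval_Qpow eval_gp[OF gp])
  have key: "Y$1$1 = Y$3$3 \<Longrightarrow> m = 0 \<and> word_equiv path_edge u (gpow Pg e)"
  proof -
    assume "Y$1$1 = Y$3$3"
    then have A: "lm powi m * U$1$1 = inverse (lm powi m) * lm powi e" unfolding Y_def by (simp add: Q0_bd)
    have x0: "lm powi m \<noteq> 0" using lam by simp
    have A': "lm powi m * lm powi m * U$1$1 = lm powi e"
    proof -
      have "lm powi m * lm powi m * U$1$1 = lm powi m * (inverse (lm powi m) * lm powi e)"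
        using A by (simp add: mult.assoc)
      also have "\<dots> = lm powi e" using x0 by (simp add: mult.assoc[symmetric])
      finally show ?thesis .
    qed
    have B: "lm powi (e - 2*m) = lm powi e / (lm powi m * lm powi m)"
    proof -
      have "2*m = m + m" by simp
      then have "lm powi (e - 2*m) = lm powi e / lm powi (m + m)"
        using power_int_diff[of lm e "2*m"] lam by simp
      also have "lm powi (m + m) = lm powi m * lm powi m" using power_int_add[of lm m m] lam by blast
      finally show ?thesis .
    qed
    have U11: "U$1$1 = lm powi (e - 2*m)"
      unfolding B using A' x0 by (simp add: eq_divide_eq mult.commute)
    define u2 where "u2 = gpow Pg (-(e - 2*m)) @ u"
    have pp: "lm powi (2 * m - e) * lm powi (e - 2 * m) = 1"
      using power_int_add[of lm "2*m-e" "e-2*m"] lam by simp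
    have "word_eval g2 (tob u2) $1$1 = 1"
      unfolding u2_def using lam pp
      by (simp add: word_eval_append tob_gpow eval_g2_Ppow mm2 U_def[symmetric] U11 power_int_minus)
    then have "word_eval g2 (tob u2) = mat 1" using hyp2_top by blast
    then have "word_equiv (\<lambda>_ _. False) (tob u2) []" using hyp2_free unfolding free_on_def by blast
    from we_map[OF this, of "\<lambda>_ _. False" fb]
    have w: "word_equiv (\<lambda>_ _. False) (map (\<lambda>(g,s). (fb g, s)) (tob u2)) []" by simp
    have gp2: "\<forall>x\<in>set u2. fst x \<in> {Gg, Pg}" unfolding u2_def using gp set_gpow[of Pg "-(e-2*m)"] by auto
    have "word_equiv (\<lambda>_ _. False) u2 []" using w fb_tob[OF gp2] by simp
    then have f: "word_equiv path_edge u2 []" using we_mono by blast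
    have "expo Pg u2 = 0" using we_expo[OF \<open>word_equiv (\<lambda>_ _. False) u2 []\<close>] by simp
    then have m0: "m = 0" unfolding u2_def e_def by simp
    have "word_equiv path_edge (gpow Pg e @ u2) (gpow Pg e @ [])" by (rule we_app[OF we_refl f])
    moreover have "word_equiv path_edge ((gpow Pg e @ gpow Pg (- e)) @ u) (gpow Pg (e + - e) @ u)"
      by (rule we_app[OF gpow_add we_refl])
    moreover have z: "gpow Pg (e + - e) = []" by (simp add: gpow_def)
    moreover have u2': "u2 = gpow Pg (-e) @ u" using m0 by (simp add: u2_def)
    ultimately have "word_equiv path_edge (gpow Pg e) u"
      by (metis append_Nil append_Nil2 append_assoc we_sym we_trans)
    then show ?thesis using m0 by (auto intro: we_sym)
  qed
  show ?thesis
  proof (intro exI[of _ Y] conjI impI)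
    show "word_eval \<rho> h = FF ** Y ** FI" by (rule ev)
    show "Y$1$3 = 0" "Y$3$1 = 0" "Y$2$3 = 0" "Y$3$2 = 0" unfolding Y_def by (simp_all add: Q0_bd)
  next
    assume "Y$1$1 = Y$3$3"
    from key[OF this] have "word_equiv path_edge h (gpow Pg e)"
      using eqv by (auto simp: gpow_def intro: we_trans)
    then show "\<exists>p. word_equiv path_edge h (gpow Pg p)" by blast
  next
    assume Y1: "Y = mat 1"
    then have "Y$1$1 = Y$3$3" by (simp add: mat1_3)
    from key[OF this] have m0: "m = 0" by blast
    then have "bd U (lm powi e) = mat 1" using Y1 unfolding Y_def by (simp add: Q0_bd_eq)
    then have "U = mat 1" using bd_eq_one by blast
    then have "word_equiv (\<lambda>_ _. False) (tob u) []" using hyp2_free unfolding free_on_def U_def by blast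
    from we_map[OF this, of "\<lambda>_ _. False" fb] have "word_equiv (\<lambda>_ _. False) u []"
      using fb_tob[OF gp] by auto
    then have "word_equiv path_edge u []" using we_mono by blast
    then show "word_equiv path_edge h []" using eqv m0 by (auto simp: gpow_def intro: we_trans)
  qed
qed

end


context setup3 begin

abbreviation "TT \<equiv> mat2 al be ga de"

definition Fk :: "int \<Rightarrow> 'a^3^3" where
  "Fk k = (if 0 \<le> k then mat_pow FF (nat k) else mat_pow FI (nat (-k)))"

lemma eval_Fpow: "word_eval \<rho> (gpow Fg k) = DD ** Fk k ** DI"
proof -
  have mi: "matrix_inv (DD ** FF ** DI) = DD ** FI ** DI" using rho_inv(1)[of Fg] rho_simps by simp
  show ?thesis
    by (simp add: eval_gpow Fk_def mi rho_simps mat_pow_conj[OF DDi(2)])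
qed

lemma powF: "mat_pow FF n $1$3 = mat_pow TT n $1$2 \<and> mat_pow FF n $3$1 = mat_pow TT n $2$1 \<and>
   mat_pow FF n $1$1 = mat_pow TT n $1$1 \<and> mat_pow FF n $3$3 = mat_pow TT n $2$2 \<and>
   mat_pow FF n $1$2 = 0 \<and> mat_pow FF n $2$1 = 0 \<and> mat_pow FF n $2$3 = 0 \<and> mat_pow FF n $3$2 = 0 \<and>
   mat_pow FF n $2$2 = 1"
proof (induction n)
  case 0 then show ?case by (simp add: mat1_3 mat1_2)
next
  case (Suc n) then show ?case by (simp add: mm3 mm2 F0_def)
qed

lemma powFI: "mat_pow FI n $1$2 = 0 \<and> mat_pow FI n $2$1 = 0 \<and> mat_pow FI n $2$3 = 0 \<and> mat_pow FI n $3$2 = 0"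
proof (induction n)
  case 0 then show ?case by (simp add: mat1_3)
next
  case (Suc n) then show ?case by (simp add: mm3 F0i_def)
qed

lemma powFI_FF: "mat_pow FI n ** mat_pow FF n = mat 1"
proof (induction n)
  case 0 then show ?case by simp
next
  case (Suc n)
  have e1: "mat_pow FF (Suc n) = mat_pow FF n ** FF" by (rule mat_pow_Suc')
  have e2: "mat_pow FI (Suc n) = FI ** mat_pow FI n" by simp
  have "mat_pow FI (Suc n) ** mat_pow FF (Suc n) = FI ** (mat_pow FI n ** mat_pow FF n) ** FF"
    unfolding e1 e2 by (simp only: matrix_mul_assoc)
  then show ?case using Suc FFi by simp
qed

lemma powF_nz: "n \<ge> 1 \<Longrightarrow> mat_pow FF n $1$3 \<noteq> 0 \<and> mat_pow FF n $3$1 \<noteq> 0"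
  using hyp1 powF[of n] by auto

lemma powFI_nz:
  assumes "n \<ge> 1"
  shows "mat_pow FI n $1$3 \<noteq> 0 \<and> mat_pow FI n $3$1 \<noteq> 0"
proof -
  define Y where "Y = mat_pow FI n"
  define Z where "Z = mat_pow FF n"
  have YZ: "Y ** Z = mat 1" unfolding Y_def Z_def by (rule powFI_FF)
  have e11: "Y$1$1 * Z$1$1 + Y$1$3 * Z$3$1 = 1" and e13: "Y$1$1 * Z$1$3 + Y$1$3 * Z$3$3 = 0"
   and e31: "Y$3$1 * Z$1$1 + Y$3$3 * Z$3$1 = 0" and e33: "Y$3$1 * Z$1$3 + Y$3$3 * Z$3$3 = 1"
  proof -
    have y: "Y$1$2 = 0" "Y$2$1 = 0" "Y$2$3 = 0" "Y$3$2 = 0" using powFI[of n] unfolding Y_def by auto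
    have z: "Z$1$2 = 0" "Z$2$1 = 0" "Z$2$3 = 0" "Z$3$2 = 0" using powF[of n] unfolding Z_def by auto
    have "(Y ** Z)$1$1 = 1" "(Y ** Z)$1$3 = 0" "(Y ** Z)$3$1 = 0" "(Y ** Z)$3$3 = 1"
      using YZ by (simp_all add: mat1_3)
    then show "Y$1$1 * Z$1$1 + Y$1$3 * Z$3$1 = 1" "Y$1$1 * Z$1$3 + Y$1$3 * Z$3$3 = 0"
      "Y$3$1 * Z$1$1 + Y$3$3 * Z$3$1 = 0" "Y$3$1 * Z$1$3 + Y$3$3 * Z$3$3 = 1"
      unfolding mm3 using y z by simp_all
  qed
  have z: "Z$1$3 \<noteq> 0" "Z$3$1 \<noteq> 0" using powF_nz[OF assms] unfolding Z_def by auto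
  have "Y$1$3 \<noteq> 0"
  proof
    assume "Y$1$3 = 0"
    then have "Y$1$1 * Z$1$1 = 1" "Y$1$1 * Z$1$3 = 0" using e11 e13 by auto
    then show False using z by auto
  qed
  moreover have "Y$3$1 \<noteq> 0"
  proof
    assume "Y$3$1 = 0"
    then have "Y$3$3 * Z$3$3 = 1" "Y$3$3 * Z$3$1 = 0" using e31 e33 by auto
    then show False using z by auto
  qed
  ultimately show ?thesis unfolding Y_def by auto
qed

lemma Fk_nz: "k \<noteq> 0 \<Longrightarrow> Fk k $1$3 \<noteq> 0 \<and> Fk k $3$1 \<noteq> 0"
  using powF_nz[of "nat k"] powFI_nz[of "nat (-k)"] by (auto simp: Fk_def)

definition inK :: "'a^3^3 \<Rightarrow> bool" where
  "inK M \<longleftrightarrow> (\<forall>i j. M$i$j \<in> K)"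

lemma K_base: "x \<in> {a, b, c, d, al, be, ga, de, lm} \<Longrightarrow> x \<in> K"
  by (rule subfield_gen.base)
lemma K_simps: "a \<in> K" "b \<in> K" "c \<in> K" "d \<in> K" "al \<in> K" "be \<in> K" "ga \<in> K" "de \<in> K" "lm \<in> K"
  "0 \<in> K" "1 \<in> K"
  by (auto intro: K_base subfield_gen.zero subfield_gen.one)
lemma K_ops: "x \<in> K \<Longrightarrow> y \<in> K \<Longrightarrow> x + y \<in> K" "x \<in> K \<Longrightarrow> y \<in> K \<Longrightarrow> x * y \<in> K"
  "x \<in> K \<Longrightarrow> - x \<in> K" "x \<in> K \<Longrightarrow> inverse x \<in> K"
  "x \<in> K \<Longrightarrow> y \<in> K \<Longrightarrow> x - y \<in> K" "x \<in> K \<Longrightarrow> y \<in> K \<Longrightarrow> x / y \<in> K"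
proof -
  show "x \<in> K \<Longrightarrow> y \<in> K \<Longrightarrow> x + y \<in> K" by (rule subfield_gen.add)
  show "x \<in> K \<Longrightarrow> y \<in> K \<Longrightarrow> x * y \<in> K" by (rule subfield_gen.mult)
  show "x \<in> K \<Longrightarrow> - x \<in> K" by (rule subfield_gen.uminus)
  show "x \<in> K \<Longrightarrow> inverse x \<in> K" by (rule subfield_gen.inv)
  show "x \<in> K \<Longrightarrow> y \<in> K \<Longrightarrow> x - y \<in> K"
  proof -
    assume "x \<in> K" "y \<in> K"
    then have "x + - y \<in> K" by (intro subfield_gen.add subfield_gen.uminus)
    then show "x - y \<in> K" by simp
  qed
  show "x \<in> K \<Longrightarrow> y \<in> K \<Longrightarrow> x / y \<in> K"
  proof -
    assume "x \<in> K" "y \<in> K"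
    then have "x * inverse y \<in> K" by (intro subfield_gen.mult subfield_gen.inv)
    then show "x / y \<in> K" by (simp add: divide_inverse)
  qed
qed

lemmas Kintro = K_ops K_simps

lemma K_sum: "finite A \<Longrightarrow> (\<forall>x\<in>A. f x \<in> K) \<Longrightarrow> sum f A \<in> K"
proof (induction A rule: finite_induct)
  case empty then show ?case by (simp add: K_simps)
next
  case (insert x F) then show ?case by (simp add: K_ops(1))
qed

lemma inK_mult: "inK A \<Longrightarrow> inK B \<Longrightarrow> inK (A ** B)"
  unfolding inK_def mm3 by (intro allI Kintro; blast)
lemma inK_one: "inK (mat 1)"
  unfolding inK_def mat1_3 by (auto simp: K_simps)

lemma inK_FF: "inK FF" unfolding inK_def forall_3 F0_def
  by (simp only: vector_3; intro conjI Kintro)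
lemma inK_FI: "inK FI" unfolding inK_def forall_3 F0i_def
  by (simp only: vector_3; intro conjI Kintro)
lemma inK_rho': "inK (rho' g)"
  unfolding inK_def forall_3
  by (cases g) (simp only: rho'_def gen.case G0_def Q0_def P0_def mat1_3 vector_3; intro conjI Kintro; simp add: K_simps)+
lemma inK_rho'i: "inK (rho'i g)"
  unfolding inK_def forall_3
  by (cases g) (simp only: rho'i_def gen.case G0_def Q0_def P0_def mat1_3 vector_3; intro conjI Kintro; simp add: K_simps)+

lemma inK_eval':
  shows "inK (word_eval rho' w)"
proof (induction w)
  case Nil then show ?case by (simp add: inK_one)
next
  case (Cons x w)
  obtain g s where x: "x = (g,s)" by (cases x)
  have h1: "inK (if s then rho' g else matrix_inv (rho' g))"
    using inK_rho'[of g] inK_rho'i[of g] mi_rho'[of g] by (cases s) simp_all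
  have e: "word_eval rho' (x # w) = (if s then rho' g else matrix_inv (rho' g)) ** word_eval rho' w"
    using x by simp
  show ?case unfolding e by (rule inK_mult[OF h1 Cons.IH])
qed

lemma inK_eval: "\<forall>x\<in>set h. fst x \<noteq> Fg \<Longrightarrow> inK (word_eval \<rho> h)"
  unfolding conj_eval by (rule inK_mult[OF inK_mult[OF inK_FF inK_eval'] inK_FI])

lemma inK_pow: "inK M \<Longrightarrow> inK (mat_pow M n)"
proof (induction n)
  case 0 then show ?case using inK_one by simp
next
  case (Suc n) then show ?case using inK_mult[OF Suc.prems Suc.IH[OF Suc.prems]] by simp
qed

lemma inK_Fk: "inK (Fk k)"
  unfolding Fk_def using inK_pow[OF inK_FF] inK_pow[OF inK_FI] by simp

end


context setup3 begin
lemma conj_entries: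
  assumes "Y$1$3 = 0" "Y$3$1 = 0" "Y$2$3 = 0" "Y$3$2 = 0"
  shows "(FF ** Y ** FI)$1$3 = al * be * (Y$3$3 - Y$1$1) / (al*de - be*ga)"
        "(FF ** Y ** FI)$3$1 = ga * de * (Y$1$1 - Y$3$3) / (al*de - be*ga)"
  using assms by (simp_all add: mm3 F0_def F0i_def divide_inverse algebra_simps)

lemma be_nz: "be \<noteq> 0"
  using hyp1 by (auto dest: spec[of _ 1] simp: mat2_def)
lemma ga_nz: "ga \<noteq> 0"
  using hyp1 by (auto dest: spec[of _ 1] simp: mat2_def)
lemma al_de: "al \<noteq> 0 \<or> de \<noteq> 0"
proof (rule ccontr)
  assume "\<not> (al \<noteq> 0 \<or> de \<noteq> 0)"
  then have "al = 0" "de = 0" by auto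
  moreover have "mat_pow TT 2 $1$2 \<noteq> 0" using hyp1 by auto
  ultimately show False by (simp add: numeral_2_eq_2 mm2)
qed

definition rr :: 3 where "rr = (if al \<noteq> 0 then 1 else 3)"
definition ss :: 3 where "ss = (if al \<noteq> 0 then 3 else 1)"

lemma H_bad:
  assumes "\<forall>x\<in>set h. fst x \<noteq> Fg" "word_eval \<rho> h $rr$ss = 0"
  shows "\<exists>p. word_equiv path_edge h (gpow Pg p)"
proof -
  obtain Y where Y: "word_eval \<rho> h = FF ** Y ** FI" "Y$1$3 = 0" "Y$3$1 = 0" "Y$2$3 = 0" "Y$3$2 = 0"
    "Y$1$1 = Y$3$3 \<longrightarrow> (\<exists>p. word_equiv path_edge h (gpow Pg p))"
    using H_struct[OF assms(1)] by blast
  have "Y$1$1 = Y$3$3"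
  proof (cases "al \<noteq> 0")
    case True
    then have r: "rr = 1" "ss = 3" by (simp_all add: rr_def ss_def)
    have "al * be * (Y$3$3 - Y$1$1) / (al*de - be*ga) = 0"
      using assms(2) Y(1-5) conj_entries(1)[of Y] unfolding r by simp
    then show ?thesis using True be_nz det2 by simp
  next
    case False
    then have "de \<noteq> 0" using al_de by simp
    have r: "rr = 3" "ss = 1" unfolding rr_def ss_def using False by simp_all
    have "ga * de * (Y$1$1 - Y$3$3) / (al*de - be*ga) = 0"
      using assms(2) Y(1-5) conj_entries(2)[of Y] unfolding r by simp
    then show ?thesis using \<open>de \<noteq> 0\<close> ga_nz det2 by simp
  qed
  then show ?thesis using Y by blast
qed

lemma H_faithful:
  assumes "\<forall>x\<in>set h. fst x \<noteq> Fg" "word_eval \<rho> h = mat 1"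
  shows "word_equiv path_edge h []"
proof -
  obtain Y where Y: "word_eval \<rho> h = FF ** Y ** FI" "Y = mat 1 \<longrightarrow> word_equiv path_edge h []"
    using H_struct[OF assms(1)] by blast
  have "FI ** (FF ** Y ** FI) ** FF = (FI ** FF) ** Y ** (FI ** FF)" by (simp only: matrix_mul_assoc)
  then have "Y = FI ** (FF ** Y ** FI) ** FF" using FFi by simp
  also have "\<dots> = mat 1"
  proof -
    have "FF ** Y ** FI = mat 1" using Y(1) assms(2) by simp
    then show ?thesis using FFi by simp
  qed
  finally show ?thesis using Y by blast
qed

lemma single_block:
  assumes "k \<noteq> 0"
  shows "word_eval \<rho> (gpow Fg k @ gpow Pg p) \<noteq> mat 1"
proof
  assume A: "word_eval \<rho> (gpow Fg k @ gpow Pg p) = mat 1"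
  have "word_eval \<rho> (gpow Pg p) = word_eval rho' (gpow Pg p)"
    by (rule word_eval_cong) (use set_gpow[of Pg p] in \<open>auto simp: rho_simps rho'_def\<close>)
  also have "\<dots> = bd (word_eval g2 (tob (gpow Pg p))) (lm powi p)"
  proof -
    have "\<forall>x\<in>set (gpow Pg p). fst x \<in> {Gg, Pg}" using set_gpow[of Pg p] by auto
    from eval_gp[OF this] show ?thesis by simp
  qed
  finally have X: "word_eval \<rho> (gpow Pg p) = bd (word_eval g2 (tob (gpow Pg p))) (lm powi p)" .
  define X where "X = word_eval \<rho> (gpow Pg p)"
  have "DD ** Fk k ** DI ** X = mat 1" using A unfolding X_def by (simp add: word_eval_append eval_Fpow)
  then have "DI ** (DD ** Fk k ** DI ** X) ** DD = mat 1" using DDi by (simp add: matrix_mul_assoc)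
  then have B: "Fk k ** (DI ** X ** DD) = mat 1" using DDi by (simp add: matrix_mul_assoc)
  have x: "X$1$3 = 0" "X$2$3 = 0" "X$3$3 = lm powi p" unfolding X_def X by (simp_all add: bd_entries)
  have "(Fk k ** (DI ** X ** DD))$1$3 = Fk k $1$3 * lm powi p"
    using x ph_nz by (simp add: mm3 Di_def Dmat_def field_simps)
  then have "Fk k $1$3 * lm powi p = 0" using B by (simp add: mat1_3)
  then show False using Fk_nz[OF assms] lam by simp
qed

end


definition pe :: "'a::comm_ring_1 \<Rightarrow> 'a poly^3^3 \<Rightarrow> 'a^3^3" where
  "pe x M = (\<chi> i j. poly (M$i$j) x)"
definition c0 :: "'a::comm_ring_1 poly^3^3 \<Rightarrow> 'a^3^3" where
  "c0 M = (\<chi> i j. coeff (M$i$j) 0)"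
definition cm :: "'a::comm_ring_1^3^3 \<Rightarrow> 'a poly^3^3" where
  "cm C = (\<chi> i j. [:C$i$j:])"
definition sm :: "'a::comm_ring_1 \<Rightarrow> 'a^3^3 \<Rightarrow> 'a^3^3" where
  "sm a M = (\<chi> i j. a * M$i$j)"

lemma pe_mult: "pe x (A ** B) = pe x A ** pe x B"
  by (simp add: pe_def matrix_matrix_mult_def poly_sum vec_eq_iff)
lemma c0_mult: "c0 (A ** B) = c0 A ** c0 B"
  by (simp add: c0_def matrix_matrix_mult_def coeff_sum coeff_mult_0 vec_eq_iff)
lemma pe_cm: "pe x (cm C) = C"
  by (simp add: pe_def cm_def vec_eq_iff)
lemma c0_cm: "c0 (cm C) = C"
  by (simp add: c0_def cm_def vec_eq_iff)
lemma pe_one: "pe x (mat 1) = mat 1"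
  by (simp add: pe_def mat_def vec_eq_iff)
lemma c0_one: "c0 (mat 1) = mat 1"
  by (simp add: c0_def mat_def vec_eq_iff)
lemma sm_left: "sm a A ** B = sm a (A ** B)"
  by (simp add: sm_def matrix_matrix_mult_def vec_eq_iff sum_distrib_left mult.assoc)
lemma sm_right: "A ** sm a B = sm a (A ** B)"
  by (simp add: sm_def matrix_matrix_mult_def vec_eq_iff sum_distrib_left mult.left_commute)
lemma sm_sm: "sm a (sm b A) = sm (a * b) A"
  by (simp add: sm_def vec_eq_iff mult.assoc)
lemma sm_one: "sm 1 A = A"
  by (simp add: sm_def vec_eq_iff)

lemma mm_supp_row:
  fixes A B :: "'a::comm_ring_1^3^3"
  assumes "\<forall>k. k \<noteq> t \<longrightarrow> A$i$k = 0"
  shows "(A ** B)$i$j = A$i$t * B$t$j"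
proof -
  have "(A ** B)$i$j = (\<Sum>k\<in>UNIV. A$i$k * B$k$j)" by (simp add: matrix_matrix_mult_def)
  also have "\<dots> = (\<Sum>k\<in>UNIV. if k = t then A$i$t * B$t$j else 0)"
    by (rule sum.cong) (use assms in auto)
  finally show ?thesis by simp
qed

lemma mm_supp_col:
  fixes A B :: "'a::comm_ring_1^3^3"
  assumes "\<forall>k. k \<noteq> t \<longrightarrow> B$k$j = 0"
  shows "(A ** B)$i$j = A$i$t * B$t$j"
proof -
  have "(A ** B)$i$j = (\<Sum>k\<in>UNIV. A$i$k * B$k$j)" by (simp add: matrix_matrix_mult_def)
  also have "\<dots> = (\<Sum>k\<in>UNIV. if k = t then A$i$t * B$t$j else 0)"
    by (rule sum.cong) (use assms in auto)
  finally show ?thesis by simp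
qed

lemma mm_zero_row:
  fixes A B :: "'a::comm_ring_1^3^3"
  assumes "\<forall>k. A$i$k = 0"
  shows "(A ** B)$i$j = 0"
  using assms by (simp add: matrix_matrix_mult_def)

definition prodL :: "(('a::comm_ring_1 poly^3^3) \<times> ('a^3^3)) list \<Rightarrow> 'a poly^3^3" where
  "prodL L = foldr (\<lambda>(H,C) M. H ** cm C ** M) L (mat 1)"

lemma prodL_simps[simp]: "prodL [] = mat 1" "prodL ((H,C) # L) = H ** cm C ** prodL L"
  by (simp_all add: prodL_def)

lemma c0_prodL:
  fixes L :: "(('a::comm_ring_1 poly^3^3) \<times> ('a^3^3)) list"
  assumes "L \<noteq> []"
    and "\<forall>(H,C)\<in>set L. c0 H $r$s * C$s$r \<noteq> 0 \<and> (\<forall>i j. (i \<noteq> r \<or> j \<noteq> s) \<longrightarrow> c0 H $i$j = 0)"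
    and nz: "\<And>x y :: 'a. x \<noteq> 0 \<Longrightarrow> y \<noteq> 0 \<Longrightarrow> x * y \<noteq> 0"
  shows "c0 (prodL L) $r$r \<noteq> 0 \<and> (\<forall>i j. i \<noteq> r \<longrightarrow> c0 (prodL L) $i$j = 0)"
  using assms(1,2)
proof (induction L)
  case Nil then show ?case by simp
next
  case (Cons p L)
  obtain H C where p: "p = (H,C)" by (cases p)
  have hc: "c0 H $r$s * C$s$r \<noteq> 0" "\<forall>i j. (i \<noteq> r \<or> j \<noteq> s) \<longrightarrow> c0 H $i$j = 0"
    using Cons.prems p by auto
  define W where "W = c0 H ** C"
  have Wr: "W$r$j = c0 H $r$s * C$s$j" for j
    unfolding W_def by (rule mm_supp_row) (use hc in auto)
  have Wi: "i \<noteq> r \<Longrightarrow> W$i$j = 0" for i j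
    unfolding W_def by (rule mm_zero_row) (use hc in auto)
  have Z: "c0 (prodL (p # L)) = W ** c0 (prodL L)"
    by (simp add: p W_def c0_mult c0_cm matrix_mul_assoc)
  show ?case
  proof (cases "L = []")
    case True
    then show ?thesis using Z Wr Wi hc by (simp add: c0_one)
  next
    case False
    then have IH: "c0 (prodL L) $r$r \<noteq> 0" "\<forall>i j. i \<noteq> r \<longrightarrow> c0 (prodL L) $i$j = 0"
      using Cons by auto
    have "(W ** c0 (prodL L))$r$r = W$r$r * c0 (prodL L) $r$r"
      by (rule mm_supp_col) (use IH in auto)
    then have "c0 (prodL (p # L)) $r$r \<noteq> 0" using Z Wr IH hc nz by simp
    moreover have "i \<noteq> r \<Longrightarrow> c0 (prodL (p # L)) $i$j = 0" for i j
      unfolding Z by (rule mm_zero_row) (use Wi in auto)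
    ultimately show ?thesis by blast
  qed
qed

context setup3 begin

definition PK :: "'a poly^3^3 \<Rightarrow> bool" where
  "PK M \<longleftrightarrow> (\<forall>i j n. coeff (M$i$j) n \<in> K)"

lemma PK_mult: "PK A \<Longrightarrow> PK B \<Longrightarrow> PK (A ** B)"
  unfolding PK_def matrix_matrix_mult_def
  by (auto simp: coeff_sum coeff_mult intro!: K_sum K_ops(2))
lemma PK_cm: "inK C \<Longrightarrow> PK (cm C)"
  unfolding PK_def inK_def cm_def by (auto simp: coeff_pCons K_simps split: nat.split)
lemma PK_one: "PK (mat 1)"
  unfolding PK_def mat_def by (auto simp: coeff_pCons K_simps split: nat.split)

lemma PK_prodL: "\<forall>(H,C)\<in>set L. PK H \<and> inK C \<Longrightarrow> PK (prodL L)"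
proof (induction L)
  case Nil then show ?case by (simp add: PK_one)
next
  case (Cons p L)
  obtain H C where p: "p = (H,C)" by (cases p)
  have "PK H" "inK C" "PK (prodL L)" using Cons p by auto
  then show ?case using p PK_mult PK_cm by simp
qed

lemma key_generic:
  fixes x :: 'a and r s :: 3 and hat :: "'a^3^3 \<Rightarrow> 'a poly^3^3"
  assumes tr: "\<forall>p :: 'a poly. p \<noteq> 0 \<longrightarrow> (\<forall>i. coeff p i \<in> K) \<longrightarrow> poly p x \<noteq> 0"
    and hat_pe: "\<And>H. pe x (hat H) = sm (x^2) (DI ** H ** DD)"
    and hat_PK: "\<And>H. inK H \<Longrightarrow> PK (hat H)"
    and hat_c0: "\<And>H i j. (i \<noteq> r \<or> j \<noteq> s) \<Longrightarrow> c0 (hat H) $i$j = 0"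
    and hat_c0rs: "\<And>H. c0 (hat H) $r$s = H$r$s"
    and L: "L \<noteq> []" "\<forall>(H,C)\<in>set L. inK H \<and> inK C \<and> H$r$s \<noteq> 0 \<and> C$s$r \<noteq> 0"
    and X: "foldr (\<lambda>(H,C) M. H ** (DD ** C ** DI) ** M) L (mat 1) = mat 1"
  shows False
proof -
  define L' where "L' = map (\<lambda>(H,C). (hat H, C)) L"
  define n where "n = length L"
  have n1: "n \<ge> 1" using L(1) unfolding n_def by (cases L) auto
  have tele: "DI ** foldr (\<lambda>(H,C) M. H ** (DD ** C ** DI) ** M) L0 (mat 1) ** DD =
              foldr (\<lambda>(H,C) M. (DI ** H ** DD) ** C ** M) L0 (mat 1)" for L0
  proof (induction L0)
    case Nil then show ?case using DDi by simp
  next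
    case (Cons p L0)
    obtain H C where p: "p = (H,C)" by (cases p)
    have "DI ** (H ** (DD ** C ** DI) ** foldr (\<lambda>(H,C) M. H ** (DD ** C ** DI) ** M) L0 (mat 1)) ** DD =
          (DI ** H ** DD) ** C ** (DI ** foldr (\<lambda>(H,C) M. H ** (DD ** C ** DI) ** M) L0 (mat 1) ** DD)"
      by (simp only: matrix_mul_assoc)
    then show ?case using Cons p by simp
  qed
  have peL: "pe x (prodL (map (\<lambda>(H,C). (hat H, C)) L0)) =
             sm (x^(2 * length L0)) (foldr (\<lambda>(H,C) M. (DI ** H ** DD) ** C ** M) L0 (mat 1))" for L0
  proof (induction L0)
    case Nil then show ?case by (simp add: pe_one sm_one)
  next
    case (Cons p L0)
    obtain H C where p: "p = (H,C)" by (cases p)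
    show ?case using Cons p
      by (simp add: pe_mult pe_cm hat_pe sm_left sm_right sm_sm power_add mult.commute power2_eq_square mult.assoc)
  qed
  have Y1: "foldr (\<lambda>(H,C) M. (DI ** H ** DD) ** C ** M) L (mat 1) = mat 1"
    using tele[of L] X DDi by simp
  have pe1: "pe x (prodL L') $r$r = x^(2*n)"
    using peL[of L] Y1 unfolding L'_def n_def by (simp add: sm_def mat_def)
  have c0L: "c0 (prodL L') $r$r \<noteq> 0"
  proof -
    have "L' \<noteq> []" using L(1) unfolding L'_def by simp
    moreover have "\<forall>(H,C)\<in>set L'. c0 H $r$s * C$s$r \<noteq> 0 \<and> (\<forall>i j. (i \<noteq> r \<or> j \<noteq> s) \<longrightarrow> c0 H $i$j = 0)"
      using L(2) unfolding L'_def by (auto simp: hat_c0rs hat_c0)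
    ultimately show ?thesis using c0_prodL[of L' r s] by auto
  qed
  have PKL: "PK (prodL L')"
    by (rule PK_prodL) (use L(2) hat_PK in \<open>auto simp: L'_def\<close>)
  define R where "R = prodL L' $r$r - monom 1 (2*n)"
  have "coeff R 0 = c0 (prodL L') $r$r" using n1 unfolding R_def by (simp add: c0_def coeff_monom)
  then have "R \<noteq> 0" using c0L by auto
  moreover have "\<forall>i. coeff R i \<in> K"
    using PKL unfolding R_def PK_def by (auto simp: coeff_monom intro!: K_ops(5) K_simps)
  moreover have "poly R x = 0"
    using pe1 unfolding R_def by (simp add: pe_def poly_monom)
  ultimately show False using tr by blast
qed

end


context setup3 begin

definition hatD :: "'a^3^3 \<Rightarrow> 'a poly^3^3" where
  "hatD H = vector [vector [monom (H$1$1) 2, monom (H$1$2) 3, monom (H$1$3) 4],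
                    vector [monom (H$2$1) 1, monom (H$2$2) 2, monom (H$2$3) 3],
                    vector [monom (H$3$1) 0, monom (H$3$2) 1, monom (H$3$3) 2]]"
definition hatA :: "'a^3^3 \<Rightarrow> 'a poly^3^3" where
  "hatA H = vector [vector [monom (H$1$1) 2, monom (H$1$2) 1, monom (H$1$3) 0],
                    vector [monom (H$2$1) 3, monom (H$2$2) 2, monom (H$2$3) 1],
                    vector [monom (H$3$1) 4, monom (H$3$2) 3, monom (H$3$3) 2]]"

lemma DHD: "(DI ** H ** DD)$i$j = inverse (DD$i$i) * H$i$j * DD$j$j"
proof -
  have "(DI ** H ** DD)$i$j = (DI ** H)$i$j * DD$j$j"
  proof (rule mm_supp_col, intro allI impI)
    fix k :: 3 assume "k \<noteq> j"
    then show "DD$k$j = 0" using exhaust_3[of k] exhaust_3[of j] by (auto simp: Dmat_def)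
  qed
  also have "(DI ** H)$i$j = DI$i$i * H$i$j"
  proof (rule mm_supp_row, intro allI impI)
    fix k :: 3 assume "k \<noteq> i"
    then show "DI$i$k = 0" using exhaust_3[of k] exhaust_3[of i] by (auto simp: Di_def)
  qed
  also have "DI$i$i = inverse (DD$i$i)"
    using exhaust_3[of i] by (auto simp: Di_def Dmat_def)
  finally show ?thesis .
qed

lemma DDd: "DD$1$1 = ph" "DD$2$2 = ph^2" "DD$3$3 = ph^3"
  by (simp_all add: Dmat_def)

lemma hatD_pe: "pe ph (hatD H) = sm (ph^2) (DI ** H ** DD)"
  using ph_nz
  by (simp add: meq3 forall_3 pe_def sm_def hatD_def DHD DDd poly_monom field_simps power_eq_if)

lemma hatA_pe: "pe (inverse ph) (hatA H) = sm ((inverse ph)^2) (DI ** H ** DD)"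
  using ph_nz
  by (simp add: meq3 forall_3 pe_def sm_def hatA_def DHD DDd poly_monom field_simps power_eq_if)

lemma hatD_PK: "inK H \<Longrightarrow> PK (hatD H)"
  unfolding PK_def inK_def hatD_def forall_3 by (simp add: coeff_monom K_simps)
lemma hatA_PK: "inK H \<Longrightarrow> PK (hatA H)"
  unfolding PK_def inK_def hatA_def forall_3 by (simp add: coeff_monom K_simps)

lemma hatD_c0: "(i \<noteq> 3 \<or> j \<noteq> 1) \<Longrightarrow> c0 (hatD H) $i$j = 0" "c0 (hatD H) $3$1 = H$3$1"
  using exhaust_3[of i] exhaust_3[of j] by (auto simp: c0_def hatD_def coeff_monom)
lemma hatA_c0: "(i \<noteq> 1 \<or> j \<noteq> 3) \<Longrightarrow> c0 (hatA H) $i$j = 0" "c0 (hatA H) $1$3 = H$1$3"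
  using exhaust_3[of i] exhaust_3[of j] by (auto simp: c0_def hatA_def coeff_monom)

lemma tr_ph: "\<forall>p :: 'a poly. p \<noteq> 0 \<longrightarrow> (\<forall>i. coeff p i \<in> K) \<longrightarrow> poly p ph \<noteq> 0"
  using trans unfolding transcendental_over_def by blast

lemma tr_inv_ph: "\<forall>p :: 'a poly. p \<noteq> 0 \<longrightarrow> (\<forall>i. coeff p i \<in> K) \<longrightarrow> poly p (inverse ph) \<noteq> 0"
proof (intro allI impI)
  fix p :: "'a poly"
  assume p: "p \<noteq> 0" "\<forall>i. coeff p i \<in> K"
  have "reflect_poly p \<noteq> 0" using p(1) coeff_0_reflect_poly_0_iff by fastforce
  moreover have "\<forall>i. coeff (reflect_poly p) i \<in> K" using p(2) by (simp add: coeff_reflect_poly K_simps)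
  ultimately have "poly (reflect_poly p) ph \<noteq> 0" using tr_ph by blast
  then show "poly p (inverse ph) \<noteq> 0" using ph_nz by (simp add: poly_reflect_poly_nz)
qed

lemma key:
  assumes "L \<noteq> []" "\<forall>(H,C)\<in>set L. inK H \<and> inK C \<and> H$rr$ss \<noteq> 0 \<and> C$ss$rr \<noteq> 0"
    and "foldr (\<lambda>(H,C) M. H ** (DD ** C ** DI) ** M) L (mat 1) = mat 1"
  shows False
proof (cases "al \<noteq> 0")
  case True
  then have r: "rr = 1" "ss = 3" by (simp_all add: rr_def ss_def)
  show False
    by (rule key_generic[of "inverse ph" hatA 1 3 L, OF tr_inv_ph hatA_pe hatA_PK hatA_c0 assms(1) _ assms(3)])
       (use assms(2) r in auto)
next
  case False
  then have r: "rr = 3" "ss = 1" unfolding rr_def ss_def by simp_all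
  show False
    by (rule key_generic[of ph hatD 3 1 L, OF tr_ph hatD_pe hatD_PK hatD_c0 assms(1) _ assms(3)])
       (use assms(2) r in auto)
qed

end


definition cyc :: "(gen word \<times> int) list \<Rightarrow> gen word" where
  "cyc L = concat (map (\<lambda>(h,k). h @ gpow Fg k) L)"
lemma cyc_simps[simp]: "cyc [] = []" "cyc ((h,k)#L) = h @ gpow Fg k @ cyc L" "cyc (L1 @ L2) = cyc L1 @ cyc L2"
  by (simp_all add: cyc_def)

definition goodL :: "(gen word \<times> int) list \<Rightarrow> bool" where
  "goodL L \<longleftrightarrow> (\<forall>(h,k)\<in>set L. (\<forall>x\<in>set h. fst x \<noteq> Fg) \<and> k \<noteq> 0)"

lemma goodL_simps[simp]: "goodL [] = True" "goodL (A @ B) \<longleftrightarrow> goodL A \<and> goodL B"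
  "goodL ((h,k) # A) \<longleftrightarrow> (\<forall>x\<in>set h. fst x \<noteq> Fg) \<and> k \<noteq> 0 \<and> goodL A"
  by (auto simp: goodL_def)

lemma pf_edge: "path_edge Pg Fg"
  by (simp add: path_edge_def)

lemma gpow_zero[simp]: "gpow g 0 = []"
  by (simp add: gpow_def)

context setup3 begin

definition red :: "gen word \<Rightarrow> gen word \<Rightarrow> bool" where
  "red w1 w2 \<longleftrightarrow> (word_eval \<rho> w1 = mat 1 \<longrightarrow> word_eval \<rho> w2 = mat 1) \<and>
                  (word_equiv path_edge w2 [] \<longrightarrow> word_equiv path_edge w1 [])"

lemma red_equiv: "word_equiv path_edge w1 w2 \<Longrightarrow> red w1 w2"
  unfolding red_def using eval_we we_trans by metis
lemma red_rot: "red (u @ v) (v @ u)"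
  unfolding red_def using eval_rot we_rot by blast
lemma red_trans: "red w1 w2 \<Longrightarrow> red w2 w3 \<Longrightarrow> red w1 w3"
  unfolding red_def by blast
lemma red_close: "red w T \<Longrightarrow> word_eval \<rho> w = mat 1 \<Longrightarrow> (word_eval \<rho> T = mat 1 \<Longrightarrow> word_equiv path_edge T []) \<Longrightarrow> word_equiv path_edge w []"
  unfolding red_def by blast

lemma eval_cyc: "word_eval \<rho> (cyc L) = foldr (\<lambda>(H,C) M. H ** (DD ** C ** DI) ** M) (map (\<lambda>(h,k). (word_eval \<rho> h, Fk k)) L) (mat 1)"
proof (induction L)
  case Nil then show ?case by simp
next
  case (Cons p L)
  obtain h k where p: "p = (h,k)" by (cases p)
  show ?case using Cons p by (simp add: word_eval_append eval_Fpow matrix_mul_assoc)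
qed

lemma Fk_sr: "k \<noteq> 0 \<Longrightarrow> Fk k $ss$rr \<noteq> 0"
  using Fk_nz[of k] unfolding rr_def ss_def by auto

lemma comm_PF: "word_equiv path_edge (gpow Pg p @ gpow Fg k) (gpow Fg k @ gpow Pg p)"
proof (rule we_comm_block, intro ballI)
  fix x y assume xy: "x \<in> set (gpow Pg p)" "y \<in> set (gpow Fg k)"
  have "fst x = Pg" using xy(1) set_gpow[of Pg p] by auto
  moreover have "fst y = Fg" using xy(2) set_gpow[of Fg k] by auto
  ultimately show "path_edge (fst x) (fst y)" using pf_edge by simp
qed

lemma main_cyc:
  "\<forall>L. length L = n \<longrightarrow> goodL L \<longrightarrow> word_eval \<rho> (cyc L) = mat 1 \<longrightarrow> word_equiv path_edge (cyc L) []"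
proof (induction n rule: less_induct)
  case (less n)
  have IH: "\<And>L'. length L' < n \<Longrightarrow> goodL L' \<Longrightarrow> word_eval \<rho> (cyc L') = mat 1 \<Longrightarrow> word_equiv path_edge (cyc L') []"
    using less by blast
  show ?case
  proof (intro allI impI)
    fix L assume len: "length L = n" and good: "goodL L" and ev: "word_eval \<rho> (cyc L) = mat 1"
    show "word_equiv path_edge (cyc L) []"
    proof (cases "L = []")
      case True then show ?thesis by (simp add: we_refl)
    next
      case Lne: False
      show ?thesis
      proof (cases "\<forall>(h,k)\<in>set L. word_eval \<rho> h $rr$ss \<noteq> 0")
        case True
        have False
        proof (rule key[of "map (\<lambda>(h,k). (word_eval \<rho> h, Fk k)) L"])
          show "map (\<lambda>(h,k). (word_eval \<rho> h, Fk k)) L \<noteq> []" using Lne by simp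
          show "\<forall>(H,C)\<in>set (map (\<lambda>(h,k). (word_eval \<rho> h, Fk k)) L). inK H \<and> inK C \<and> H$rr$ss \<noteq> 0 \<and> C$ss$rr \<noteq> 0"
            using True good by (auto simp: goodL_def inK_eval inK_Fk Fk_sr)
          show "foldr (\<lambda>(H,C) M. H ** (DD ** C ** DI) ** M) (map (\<lambda>(h,k). (word_eval \<rho> h, Fk k)) L) (mat 1) = mat 1"
            using ev by (simp add: eval_cyc)
        qed
        then show ?thesis ..
      next
        case bad: False
        then obtain h k where hk: "(h,k) \<in> set L" and z: "word_eval \<rho> h $rr$ss = 0" by auto
        from hk obtain L1 L2 where Ls: "L = L1 @ (h,k) # L2" by (meson split_list)
        have hw: "\<forall>x\<in>set h. fst x \<noteq> Fg" "k \<noteq> 0" using good hk unfolding goodL_def by auto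
        obtain p where hp: "word_equiv path_edge h (gpow Pg p)" using H_bad[OF hw(1) z] by blast
        define M where "M = L2 @ L1"
        have goodM: "goodL M" using good unfolding M_def Ls by simp
        have lenM: "length M + 1 = n" using len unfolding M_def Ls by simp
        have r1: "red (cyc L) (h @ gpow Fg k @ cyc M)"
          using red_rot[of "cyc L1" "h @ gpow Fg k @ cyc L2"] unfolding Ls M_def by simp
        have r2: "red (h @ gpow Fg k @ cyc M) (gpow Fg k @ gpow Pg p @ cyc M)"
        proof (rule red_equiv)
          have "word_equiv path_edge (h @ (gpow Fg k @ cyc M)) (gpow Pg p @ (gpow Fg k @ cyc M))"
            by (rule we_app[OF hp we_refl])
          moreover have "word_equiv path_edge ((gpow Pg p @ gpow Fg k) @ cyc M) ((gpow Fg k @ gpow Pg p) @ cyc M)"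
            by (rule we_app[OF comm_PF we_refl])
          ultimately show "word_equiv path_edge (h @ gpow Fg k @ cyc M) (gpow Fg k @ gpow Pg p @ cyc M)"
            by (auto intro: we_trans)
        qed
        have r12: "red (cyc L) (gpow Fg k @ gpow Pg p @ cyc M)" by (rule red_trans[OF r1 r2])
        show ?thesis
        proof (cases M)
          case Nil
          have "word_eval \<rho> (gpow Fg k @ gpow Pg p) = mat 1"
            using r12 ev Nil unfolding red_def by simp
          then show ?thesis using single_block[OF hw(2)] by blast
        next
          case (Cons q M')
          obtain h2 k2 where q: "q = (h2,k2)" by (cases q)
          have g2: "\<forall>x\<in>set h2. fst x \<noteq> Fg" "k2 \<noteq> 0" "goodL M'"
            using goodM Cons q unfolding goodL_def by auto
          have hw2: "\<forall>x\<in>set (gpow Pg p @ h2). fst x \<noteq> Fg" using g2(1) set_gpow[of Pg p] by auto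
          have r3: "red (gpow Fg k @ gpow Pg p @ cyc M) ((gpow Pg p @ h2) @ gpow Fg k2 @ cyc M' @ gpow Fg k)"
            using red_rot[of "gpow Fg k" "gpow Pg p @ h2 @ gpow Fg k2 @ cyc M'"] Cons q by simp
          have r13: "red (cyc L) ((gpow Pg p @ h2) @ gpow Fg k2 @ cyc M' @ gpow Fg k)"
            by (rule red_trans[OF r12 r3])
          show ?thesis
          proof (cases "M' = []")
            case True
            have r4: "red ((gpow Pg p @ h2) @ gpow Fg k2 @ cyc M' @ gpow Fg k) ((gpow Pg p @ h2) @ gpow Fg (k2 + k))"
              using True by (auto intro!: red_equiv we_app we_refl gpow_add)
            have r14: "red (cyc L) ((gpow Pg p @ h2) @ gpow Fg (k2 + k))" by (rule red_trans[OF r13 r4])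
            show ?thesis
            proof (cases "k2 + k = 0")
              case True
              show ?thesis
                by (rule red_close[OF r14 ev]) (use True H_faithful[OF hw2] in simp)
            next
              case False
              have "length [(gpow Pg p @ h2, k2 + k)] < n" using lenM Cons True by simp
              moreover have "goodL [(gpow Pg p @ h2, k2 + k)]" using hw2 False by (simp add: goodL_def)
              ultimately show ?thesis
                using red_close[OF r14 ev] IH[of "[(gpow Pg p @ h2, k2 + k)]"] by simp
            qed
          next
            case False
            then obtain M'' hl kl where M': "M' = M'' @ [(hl,kl)]" by (metis rev_exhaust surj_pair)
            have g3: "\<forall>x\<in>set hl. fst x \<noteq> Fg" "goodL M''" using g2(3) M' unfolding goodL_def by auto
            have r4: "red ((gpow Pg p @ h2) @ gpow Fg k2 @ cyc M' @ gpow Fg k)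
                          ((gpow Pg p @ h2) @ gpow Fg k2 @ cyc M'' @ hl @ gpow Fg (kl + k))"
              using M' by (auto intro!: red_equiv we_app we_refl gpow_add)
            have r14: "red (cyc L) ((gpow Pg p @ h2) @ gpow Fg k2 @ cyc M'' @ hl @ gpow Fg (kl + k))"
              by (rule red_trans[OF r13 r4])
            show ?thesis
            proof (cases "kl + k = 0")
              case False
              define N where "N = (gpow Pg p @ h2, k2) # M'' @ [(hl, kl + k)]"
              have cN: "cyc N = (gpow Pg p @ h2) @ gpow Fg k2 @ cyc M'' @ hl @ gpow Fg (kl + k)"
                unfolding N_def by simp
              have "length N < n" using lenM Cons M' unfolding N_def by simp
              moreover have "goodL N" using hw2 g2 g3 False unfolding N_def goodL_def by auto
              ultimately show ?thesis using red_close[OF r14 ev] IH[of N] cN by simp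
            next
              case True
              define N where "N = (hl @ gpow Pg p @ h2, k2) # M''"
              have r5: "red ((gpow Pg p @ h2) @ gpow Fg k2 @ cyc M'' @ hl @ gpow Fg (kl + k)) (cyc N)"
                using True red_rot[of "(gpow Pg p @ h2) @ gpow Fg k2 @ cyc M''" hl] unfolding N_def by simp
              have "length N < n" using lenM Cons M' unfolding N_def by simp
              moreover have "goodL N" using hw2 g2 g3 unfolding N_def goodL_def by auto
              ultimately show ?thesis using red_close[OF red_trans[OF r14 r5] ev] IH[of N] by simp
            qed
          qed
        qed
      qed
    qed
  qed
qed

lemma decomp: "\<exists>L h. goodL L \<and> (\<forall>x\<in>set h. fst x \<noteq> Fg) \<and> w = cyc L @ h"
proof (induction w)
  case Nil
  show ?case by (rule exI[of _ "[]"], rule exI[of _ "[]"]) (simp add: goodL_def)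
next
  case (Cons x w)
  then obtain L h where Lh: "goodL L" "\<forall>x\<in>set h. fst x \<noteq> Fg" "w = cyc L @ h" by blast
  obtain g s where x: "x = (g,s)" by (cases x)
  show ?case
  proof (cases "g = Fg")
    case True
    define k :: int where "k = (if s then 1 else -1)"
    have "gpow Fg k = [(Fg,s)]" unfolding k_def by (simp add: gpow_def)
    then have "x # w = cyc (([], k) # L) @ h" using x True Lh(3) by simp
    moreover have "goodL (([], k) # L)" using Lh(1) unfolding goodL_def k_def by auto
    ultimately show ?thesis using Lh(2) by blast
  next
    case False
    show ?thesis
    proof (cases L)
      case Nil
      then show ?thesis using Lh x False by (intro exI[of _ "[]"] exI[of _ "x # h"]) (auto simp: goodL_def)
    next
      case (Cons q L')
      obtain h1 k1 where q: "q = (h1,k1)" by (cases q)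
      have "x # w = cyc ((x # h1, k1) # L') @ h" using Lh(3) Cons q by simp
      moreover have "goodL ((x # h1, k1) # L')" using Lh(1) Cons q x False unfolding goodL_def by auto
      ultimately show ?thesis using Lh(2) by blast
    qed
  qed
qed

lemma faithful: "faithful_raag_rep path_edge \<rho>"
  unfolding faithful_raag_rep_def
proof (intro conjI allI impI)
  fix g show "invertible (\<rho> g)" by (rule rho_inv(2))
next
  fix g h assume "path_edge g h" then show "\<rho> g ** \<rho> h = \<rho> h ** \<rho> g" by (rule rho_comm)
next
  fix w assume ev: "word_eval \<rho> w = mat 1"
  obtain L h where Lh: "goodL L" "\<forall>x\<in>set h. fst x \<noteq> Fg" "w = cyc L @ h" using decomp by blast
  have ev2: "word_eval \<rho> (h @ cyc L) = mat 1" using ev Lh(3) eval_rot by blast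
  have "word_equiv path_edge (h @ cyc L) []"
  proof (cases L)
    case Nil
    then show ?thesis using H_faithful[OF Lh(2)] ev2 by simp
  next
    case (Cons q L')
    obtain h1 k1 where q: "q = (h1,k1)" by (cases q)
    have c: "h @ cyc L = cyc ((h @ h1, k1) # L')" using Cons q by simp
    have "goodL ((h @ h1, k1) # L')" using Lh(1,2) Cons q unfolding goodL_def by auto
    then show ?thesis using main_cyc ev2 c by metis
  qed
  then show "word_equiv path_edge w []" using Lh(3) we_rot by blast
qed

end

theorem theorem3p3:
  fixes a b c d al be ga de lm ph :: "'a::field"
  assumes field: "iso_to_complex TYPE('a) \<or>
                  (alg_closed TYPE('a) \<and> prime CHAR('a) \<and> infinite_trdeg TYPE('a))"
    and det1: "a * d - b * c \<noteq> 0"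
    and det2: "al * de - be * ga \<noteq> 0"
    and lam: "lm \<noteq> 0"
    and hyp1: "\<forall>n::nat. n \<ge> 1 \<longrightarrow>
                 (mat_pow (mat2 al be ga de) n) $ 1 $ 2 \<noteq> 0 \<and> (mat_pow (mat2 al be ga de) n) $ 2 $ 1 \<noteq> 0"
    and hyp2_free: "free_on (gens2 a b c d lm)"
    and hyp2_top: "\<forall>w. (word_eval (gens2 a b c d lm) w) $ 1 $ 1 = 1 \<longrightarrow>
                        word_eval (gens2 a b c d lm) w = mat 1"
    and trans: "transcendental_over {a, b, c, d, al, be, ga, de, lm} ph"
  shows "faithful_raag_rep path_edge (rep a b c d al be ga de lm ph)"
proof -
  interpret setup3 a b c d al be ga de lm ph
    by (unfold_locales) (rule det1 det2 lam hyp1 hyp2_free hyp2_top trans)+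
  show ?thesis by (rule faithful)
qed



end
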